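(* Assume $p>k-1$. Then for all integers $n\ge 0$, $0\le i\le p-2$ and $0\le j\le k-2$, \[ \Big\| \sum_{t=0}^{j} (-1)^{j-t}\binom{j}{t}\, Q_{n,t}(f,\omega^i)\big(u^{-t}(1+X)-1\big)\Big\| \le p^{-(n+1)j}. \]
   Context: Let $p$ be an odd prime and fix an embedding $\overline{\mathbb{Q}}\hookrightarrow\mathbb{C}_p$. Let $f=\sum_{n\ge1}a_nq^n\in S_k(\Gamma_1(N_f),\epsilon_f)$ be a normalized cuspidal Hecke eigenform of weight $k\ge2$ with $p\nmid N_f$ and $\mathrm{ord}_p(a_p)>0$. Let $E/\mathbb{Q}_p$ be a finite extension containing all $a_n$ and all values of $\epsilon_f$, with ring of integers $\mathcal{O}$. Let $|\cdot|_p$ be normalized by $|p|_p=p^{-1}$; for a polynomial or power series $P=\sum c_iX^i$ with coefficients in a finite extension of $\mathbb{Q}_p$, put $\|P\|=\sup_i|c_i|_p$. Galois groups: $\Delta=\mathrm{Gal}(\mathbb{Q}(\mu_p)/\mathbb{Q})$, $\omega$ the Teichmüller character of $\Delta$; $G_\infty=\mathrm{Gal}(\mathbb{Q}(\mu_{p^\infty})/\mathbb{Q}(\mu_p))\cong\mathbb{Z}_p$ with a fixed topological generator $\gamma$, and $u=\chi_{\mathrm{cyc}}(\gamma)\in1+p\mathbb{Z}_p$; $G_n=\mathrm{Gal}(\mathbb{Q}(\mu_{p^{n+1}})/\mathbb{Q}(\mu_p))$, cyclic of order $p^n$, so $\mathrm{Gal}(\mathbb{Q}(\mu_{p^{n+1}})/\mathbb{Q})\cong\Delta\times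 G_n$. For $a\in(\mathbb{Z}/p^{n+1}\mathbb{Z})^\times$ let $\sigma_a$ be $\zeta\mapsto\zeta^a$, $\bar\sigma_a$ its image in $G_n$, and $m(a)\in\{0,\dots,p^n-1\}$ the integer with $\bar\sigma_a=\gamma^{m(a)}$. Periods: for $r\in\mathbb{Q}$ and a sign $\pm$, put $\xi_f^\pm(r)=\pi\sqrt{-1}\big(\int_r^{i\infty}f(z)(zX+Y)^{k-2}dz\pm(-1)^k\int_{-r}^{i\infty}f(z)(-zX+Y)^{k-2}dz\big)\in\mathbb{C}[X,Y]$. The numbers $\Omega_f^\pm\in\mathbb{C}^\times$ are cohomological periods of $f$: $\xi_f^\pm(r)/\Omega_f^\pm\in\mathcal{O}[X,Y]$ for all $r\in\mathbb{Q}$ (normalized, up to $\mathcal{O}^\times$, so that the resulting $\mathcal{O}$-valued modular symbol is primitive). Theta elements: for $n\ge0$, $0\le i\le p-2$, $0\le j\le k-2$, \[\theta_{n,j}(f,\omega^i)=\frac{\pi\sqrt{-1}}{\Omega_f^{(-1)^i}}\sum_{a\in(\mathbb{Z}/p^{n+1}\mathbb{Z})^\times}\Big(\int_{-a/p^{n+1}}^{i\infty}f(z)(p^{n+1}z+a)^jdz+(-1)^{i+k+j}\int_{a/p^{n+1}}^{i\infty}f(z)(p^{n+1}z-a)^jdz\Big)\omega^{i-j}(a)\bar\sigma_a\in\mathcal{O}[G_n],\] and $Q_{n,j}(f,\omega^i)\in\mathcal{O}[X]$ is the polynomial obtained by replacing each $\bar\sigma_a$ by $(1+X)^{m(a)}$.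 *)

theory Defs
  imports "HOL-Analysis.Analysis" "HOL-Computational_Algebra.Polynomial"
begin

definition nonarch_abs :: "('K::field \<Rightarrow> real) \<Rightarrow> bool" where
  "nonarch_abs absv \<longleftrightarrow>
     (\<forall>x. 0 \<le> absv x) \<and> (\<forall>x. absv x = 0 \<longleftrightarrow> x = 0) \<and>
     (\<forall>x y. absv (x * y) = absv x * absv y) \<and>
     (\<forall>x y. absv (x + y) \<le> max (absv x) (absv y))"

text \<open>(K, absv) is (a copy of) C_p and iota is an embedding of the field of algebraic
  complex numbers into it: absv is non-archimedean with |p| = 1/p, K is complete and
  algebraically closed, and iota(Qbar) is dense in K.\<close>
definition Cp_setup :: "('K::field_char_0 \<Rightarrow> real) \<Rightarrow> nat \<Rightarrow> (complex \<Rightarrow> 'K) \<Rightarrow> bool" where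
  "Cp_setup absv p \<iota> \<longleftrightarrow>
     nonarch_abs absv \<and> absv (of_nat p) = 1 / real p \<and>
     (\<forall>X::nat \<Rightarrow> 'K. (\<forall>e>0. \<exists>M. \<forall>m\<ge>M. \<forall>n\<ge>M. absv (X m - X n) < e) \<longrightarrow>
        (\<exists>L. \<forall>e>0. \<exists>M. \<forall>n\<ge>M. absv (X n - L) < e)) \<and>
     (\<forall>P::'K poly. 0 < degree P \<longrightarrow> (\<exists>x. poly P x = 0)) \<and>
     \<iota> 1 = 1 \<and>
     (\<forall>x y. algebraic x \<longrightarrow> algebraic y \<longrightarrow> \<iota> (x + y) = \<iota> x + \<iota> y \<and> \<iota> (x * y) = \<iota> x * \<iota> y) \<and>
     (\<forall>x. \<forall>e>0. \<exists>c. algebraic c \<and> absv (x - \<iota> c) < e)"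

definition in_Qp :: "('K::field_char_0 \<Rightarrow> real) \<Rightarrow> 'K \<Rightarrow> bool" where
  "in_Qp absv x \<longleftrightarrow> (\<forall>e>0. \<exists>q::rat. absv (x - of_rat q) < e)"

definition in_Zp :: "('K::field_char_0 \<Rightarrow> real) \<Rightarrow> 'K \<Rightarrow> bool" where
  "in_Zp absv x \<longleftrightarrow> (\<forall>e>0. \<exists>z::int. absv (x - of_int z) < e)"

definition finite_ext_Qp :: "('K::field_char_0 \<Rightarrow> real) \<Rightarrow> 'K set \<Rightarrow> bool" where
  "finite_ext_Qp absv E \<longleftrightarrow>
     {x. in_Qp absv x} \<subseteq> E \<and>
     (\<forall>x\<in>E. \<forall>y\<in>E. x + y \<in> E \<and> x - y \<in> E \<and> x * y \<in> E \<and> inverse x \<in> E) \<and>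
     (\<exists>bs::'K list. set bs \<subseteq> E \<and>
        (\<forall>x\<in>E. \<exists>cs::'K list. length cs = length bs \<and> (\<forall>c\<in>set cs. in_Qp absv c) \<and>
            x = (\<Sum>l<length bs. cs ! l * bs ! l)))"

definition teich :: "('K::field_char_0 \<Rightarrow> real) \<Rightarrow> nat \<Rightarrow> int \<Rightarrow> 'K" where
  "teich absv p a = (THE \<zeta>. \<zeta> ^ (p - 1) = 1 \<and> absv (\<zeta> - of_int a) < 1)"

text \<open>m(a): the exponent with bar sigma_a = gamma^m(a) in G_n, i.e. the unique
  m in {0..p^n-1} with u^m congruent to <a> = a * omega(a)^(-1) modulo p^(n+1).\<close>
definition mexp :: "('K::field_char_0 \<Rightarrow> real) \<Rightarrow> nat \<Rightarrow> 'K \<Rightarrow> nat \<Rightarrow> int \<Rightarrow> nat" where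
  "mexp absv p u n a = (THE m. m < p ^ n \<and>
      absv (u ^ m - of_int a * inverse (teich absv p a)) \<le> 1 / real p ^ (n + 1))"

definition pnorm :: "('K::field_char_0 \<Rightarrow> real) \<Rightarrow> 'K poly \<Rightarrow> real" where
  "pnorm absv P = Max ((\<lambda>l. absv (coeff P l)) ` {..degree P})"

definition upper_half :: "complex set" where
  "upper_half = {z. 0 < Im z}"

definition moeb :: "int \<Rightarrow> int \<Rightarrow> int \<Rightarrow> int \<Rightarrow> complex \<Rightarrow> complex" where
  "moeb a b c d z = (of_int a * z + of_int b) / (of_int c * z + of_int d)"

definition dirichlet_char :: "nat \<Rightarrow> (int \<Rightarrow> complex) \<Rightarrow> bool" where
  "dirichlet_char N \<epsilon> \<longleftrightarrow>
     (\<forall>m. \<epsilon> (m + int N) = \<epsilon> m) \<and> \<epsilon> 1 = 1 \<and>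
     (\<forall>m n. \<epsilon> (m * n) = \<epsilon> m * \<epsilon> n) \<and> (\<forall>m. \<epsilon> m = 0 \<longleftrightarrow> \<not> coprime m (int N))"

text \<open>Cusp forms in S_k(Gamma_1(N), eps): holomorphic on the upper half plane,
  transforming with character eps under Gamma_0(N), and vanishing at every cusp
  (f|_k gamma tends to 0 uniformly as Im z tends to infinity, for all gamma in SL_2(Z)).\<close>
definition cusp_form :: "nat \<Rightarrow> nat \<Rightarrow> (int \<Rightarrow> complex) \<Rightarrow> (complex \<Rightarrow> complex) \<Rightarrow> bool" where
  "cusp_form k N \<epsilon> f \<longleftrightarrow>
     f holomorphic_on upper_half \<and>
     (\<forall>a b c d. a * d - b * c = 1 \<and> int N dvd c \<longrightarrow>
        (\<forall>z\<in>upper_half. f (moeb a b c d z) = \<epsilon> d * (of_int c * z + of_int d) ^ k * f z)) \<and>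
     (\<forall>a b c d. a * d - b * c = 1 \<longrightarrow>
        (\<forall>e>0. \<exists>Y. \<forall>z. Y < Im z \<longrightarrow>
            norm (f (moeb a b c d z) / (of_int c * z + of_int d) ^ k) < e))"

definition q_expansion :: "(complex \<Rightarrow> complex) \<Rightarrow> (nat \<Rightarrow> complex) \<Rightarrow> bool" where
  "q_expansion f an \<longleftrightarrow>
     (\<forall>z\<in>upper_half. (\<lambda>n. an n * exp (2 * of_real pi * \<i> * of_nat n * z)) sums f z)"

text \<open>Normalized cuspidal Hecke eigenform with q-coefficients an: eigenvector of all
  Hecke operators T_m (m >= 1, including U_l for l | N), whose action on q-expansions of
  forms in S_k(Gamma_1(N), eps) is a_n(T_m g) = sum_{d | (m,n)} eps(d) d^(k-1) a_(mn/d^2)(g).\<close>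
definition normalized_eigenform ::
  "nat \<Rightarrow> nat \<Rightarrow> (int \<Rightarrow> complex) \<Rightarrow> (complex \<Rightarrow> complex) \<Rightarrow> (nat \<Rightarrow> complex) \<Rightarrow> bool" where
  "normalized_eigenform k N \<epsilon> f an \<longleftrightarrow>
     cusp_form k N \<epsilon> f \<and> q_expansion f an \<and> an 0 = 0 \<and> an 1 = 1 \<and>
     (\<forall>m\<ge>1. \<exists>ev. \<forall>n\<ge>1.
        (\<Sum>d\<in>{d. d dvd gcd m n}. \<epsilon> (int d) * of_nat d ^ (k - 1) * an (m * n div d ^ 2)) = ev * an n)"

definition int_to_icusp :: "(complex \<Rightarrow> complex) \<Rightarrow> real \<Rightarrow> complex" where
  "int_to_icusp g r = \<i> * integral {0..} (\<lambda>t::real. g (of_real r + \<i> * of_real t))"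

text \<open>Coefficient of X^s Y^(k-2-s) in xi_f^{sg}(r) (sg = True for +, False for -).\<close>
definition xi_coeff :: "(complex \<Rightarrow> complex) \<Rightarrow> nat \<Rightarrow> bool \<Rightarrow> real \<Rightarrow> nat \<Rightarrow> complex" where
  "xi_coeff f k sg r s = of_real pi * \<i> * of_nat ((k - 2) choose s) *
     (int_to_icusp (\<lambda>z. f z * z ^ s) r +
      (if sg then 1 else -1) * (-1) ^ k * int_to_icusp (\<lambda>z. f z * (- z) ^ s) (- r))"

text \<open>Omega is a cohomological period for sign sg: all xi_f^sg(r)/Omega (r rational)
  have coefficients in O (the ring of integers of E), and the resulting O-valued
  modular symbol is primitive (some coefficient is a unit).\<close>
definition cohom_period ::
  "('K::field_char_0 \<Rightarrow> real) \<Rightarrow> (complex \<Rightarrow> 'K) \<Rightarrow> 'K set \<Rightarrow> (complex \<Rightarrow> complex) \<Rightarrow> nat \<Rightarrow> bool \<Rightarrow> complex \<Rightarrow> bool" where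
  "cohom_period absv \<iota> E f k sg \<Omega> \<longleftrightarrow> \<Omega> \<noteq> 0 \<and>
     (\<forall>r::rat. \<forall>s\<le>k - 2. algebraic (xi_coeff f k sg (of_rat r) s / \<Omega>) \<and>
        \<iota> (xi_coeff f k sg (of_rat r) s / \<Omega>) \<in> E \<and> absv (\<iota> (xi_coeff f k sg (of_rat r) s / \<Omega>)) \<le> 1) \<and>
     (\<exists>r::rat. \<exists>s\<le>k - 2. absv (\<iota> (xi_coeff f k sg (of_rat r) s / \<Omega>)) = 1)"

text \<open>The complex coefficient of bar sigma_a in theta_{n,j}(f, omega^i), before multiplying
  by omega^{i-j}(a); a runs through representatives 1..p^(n+1) prime to p.\<close>
definition theta_coeff ::
  "(complex \<Rightarrow> complex) \<Rightarrow> nat \<Rightarrow> complex \<Rightarrow> nat \<Rightarrow> nat \<Rightarrow> nat \<Rightarrow> nat \<Rightarrow> int \<Rightarrow> complex" where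
  "theta_coeff f k \<Omega> p n i j a = of_real pi * \<i> / \<Omega> *
     (int_to_icusp (\<lambda>z. f z * (of_nat (p ^ (n + 1)) * z + of_int a) ^ j) (- of_int a / real (p ^ (n + 1))) +
      (-1) ^ (i + k + j) *
      int_to_icusp (\<lambda>z. f z * (of_nat (p ^ (n + 1)) * z - of_int a) ^ j) (of_int a / real (p ^ (n + 1))))"

definition units_mod :: "nat \<Rightarrow> nat \<Rightarrow> int set" where
  "units_mod p n = {a. 1 \<le> a \<and> a \<le> int (p ^ (n + 1)) \<and> coprime a (int p)}"

definition Qpoly ::
  "('K::field_char_0 \<Rightarrow> real) \<Rightarrow> (complex \<Rightarrow> 'K) \<Rightarrow> (complex \<Rightarrow> complex) \<Rightarrow> nat \<Rightarrow> complex \<Rightarrow> complex \<Rightarrow>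
   nat \<Rightarrow> 'K \<Rightarrow> nat \<Rightarrow> nat \<Rightarrow> nat \<Rightarrow> 'K poly" where
  "Qpoly absv \<iota> f k Omp Omm p u n i j =
     (\<Sum>a\<in>units_mod p n.
        smult (\<iota> (theta_coeff f k (if even i then Omp else Omm) p n i j a) *
               teich absv p a ^ nat ((int i - int j) mod (int p - 1)))
              ([:1, 1:] ^ mexp absv p u n a))"

end

theory Submission
  imports Defs "HOL-Number_Theory.Number_Theory" "HOL-Complex_Analysis.Complex_Analysis"
begin

hide_const (open) UnivPoly.monom UnivPoly.coeff Module.module.smult


interpretation rq: vector_space "\<lambda>(q::rat) (z::complex). of_rat q * z"
  by unfold_locales (auto simp: of_rat_add of_rat_mult algebra_simps)

lemma alg_from_span:
  fixes z :: complex
  assumes fin: "finite S" and sp: "\<And>m. z ^ m \<in> rq.span S"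
  shows "algebraic z"
proof (cases "inj_on (\<lambda>m. z ^ m) {..card S}")
  case False
  then obtain m1 m2 where m: "m1 \<le> card S" "m2 \<le> card S" "m1 \<noteq> m2" "z ^ m1 = z ^ m2"
    unfolding inj_on_def by auto
  define P :: "complex poly" where "P = monom 1 m1 - monom 1 m2"
  have "coeff P m1 \<noteq> 0" using m by (simp add: P_def coeff_monom)
  hence "P \<noteq> 0" by auto
  moreover have "poly P z = 0" using m by (simp add: P_def poly_monom)
  moreover have "coeff P i \<in> \<int>" for i by (simp add: P_def coeff_monom)
  ultimately show ?thesis by (intro algebraicI[of P]) auto
next
  case True
  define A where "A = (\<lambda>m. z ^ m) ` {..card S}"
  have cardA: "card A = Suc (card S)" using True by (simp add: A_def card_image)
  have "A \<subseteq> rq.span S" using sp by (auto simp: A_def)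
  hence "\<not> rq.independent A" by (metis rq.independent_span_bound[OF fin] cardA not_less_eq_eq order_refl)
  then obtain T u v0 where T: "finite T" "T \<subseteq> A" "(\<Sum>v\<in>T. of_rat (u v) * v) = 0" "v0 \<in> T" "u v0 \<noteq> 0"
    unfolding rq.dependent_explicit by blast
  define idx where "idx = inv_into {..card S} (\<lambda>m. z ^ m)"
  have zidx: "z ^ idx v = v" if "v \<in> A" for v using that by (auto simp: A_def idx_def f_inv_into_f)
  have injT: "inj_on idx T"
    using T(2) unfolding idx_def A_def by (meson inj_on_inv_into inj_on_subset)
  define P :: "complex poly" where "P = (\<Sum>v\<in>T. monom (of_rat (u v)) (idx v))"
  have cP: "coeff P i = (\<Sum>v\<in>T. if idx v = i then of_rat (u v) else 0)" for i
    by (simp add: P_def coeff_sum coeff_monom)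
  have "coeff P i \<in> \<rat>" for i unfolding cP by (intro Rats_sum) auto
  moreover have "coeff P (idx v0) = of_rat (u v0)"
  proof -
    have "coeff P (idx v0) = (\<Sum>v\<in>T. if v = v0 then of_rat (u v) else 0)"
      unfolding cP using injT T(4) by (intro sum.cong) (auto simp: inj_on_def)
    also have "\<dots> = of_rat (u v0)" using T(1,4) by simp
    finally show ?thesis .
  qed
  hence "P \<noteq> 0" using T(5) by auto
  moreover have "poly P z = 0"
  proof -
    have "poly P z = (\<Sum>v\<in>T. of_rat (u v) * z ^ idx v)" by (simp add: P_def poly_sum poly_monom)
    also have "\<dots> = (\<Sum>v\<in>T. of_rat (u v) * v)" using T(2) zidx by (intro sum.cong) auto
    finally show ?thesis using T(3) by simp
  qed
  ultimately show ?thesis by (intro algebraicI'[of P]) auto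
qed

lemma alg_monic:
  fixes x :: complex
  assumes "algebraic x"
  shows "\<exists>d c. x ^ d = (\<Sum>i<d. of_rat (c i) * x ^ i)"
proof -
  obtain P where P: "\<And>i. coeff P i \<in> \<rat>" "P \<noteq> 0" "poly P x = 0"
    using assms unfolding algebraic_altdef by blast
  define cq where "cq i = (SOME q. coeff P i = of_rat q)" for i
  have cq: "coeff P i = of_rat (cq i)" for i
    unfolding cq_def by (rule someI_ex) (use P(1)[of i] in \<open>auto elim: Rats_cases\<close>)
  define d where "d = degree P"
  have Ld: "cq d \<noteq> 0" using P(2) cq[of d] by (auto simp: d_def)
  have "0 = (\<Sum>i\<le>d. coeff P i * x ^ i)" using P(3) by (simp add: poly_altdef d_def)
  also have "\<dots> = (\<Sum>i<d. coeff P i * x ^ i) + of_rat (cq d) * x ^ d"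
    using cq[of d] by (simp add: lessThan_Suc_atMost[symmetric])
  finally have h: "x ^ d * of_rat (cq d) = - (\<Sum>i<d. of_rat (cq i) * x ^ i)"
    by (simp add: cq algebra_simps eq_neg_iff_add_eq_0)
  have "(\<Sum>i<d. of_rat (- cq i / cq d) * x ^ i) = - (\<Sum>i<d. of_rat (cq i) * x ^ i) / of_rat (cq d)"
    by (simp add: of_rat_divide sum_divide_distrib sum_negf)
  also have "\<dots> = x ^ d" using Ld by (simp add: h[symmetric])
  finally have "x ^ d = (\<Sum>i<d. of_rat (- cq i / cq d) * x ^ i)" by simp
  thus ?thesis by (intro exI[of _ d] exI[of _ "\<lambda>i. - cq i / cq d"])
qed

lemma span_powers:
  fixes x :: complex
  assumes "x ^ d = (\<Sum>i<d. of_rat (c i) * x ^ i)"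
  shows "x ^ m \<in> rq.span ((\<lambda>i. x ^ i) ` {..<d})"
proof (induction m rule: less_induct)
  case (less m)
  show ?case
  proof (cases "m < d")
    case True thus ?thesis by (intro rq.span_base) auto
  next
    case False
    have "x ^ m = x ^ (m - d) * x ^ d" using False by (simp add: power_add[symmetric])
    also have "\<dots> = (\<Sum>i<d. of_rat (c i) * x ^ (m - d + i))"
      by (simp add: assms sum_distrib_left power_add algebra_simps)
    also have "\<dots> \<in> rq.span ((\<lambda>i. x ^ i) ` {..<d})"
    proof (intro rq.span_sum rq.span_scale)
      fix i assume "i \<in> {..<d}"
      thus "x ^ (m - d + i) \<in> rq.span ((\<lambda>i. x ^ i) ` {..<d})" using False by (intro less) auto
    qed
    finally show ?thesis .
  qed
qed

lemma span_prod:
  fixes a b :: complex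
  assumes "finite A" "finite B" "a \<in> rq.span A" "b \<in> rq.span B"
  shows "a * b \<in> rq.span ((\<lambda>(v, w). v * w) ` (A \<times> B))"
proof -
  obtain u where u: "a = (\<Sum>v\<in>A. of_rat (u v) * v)" using assms(3) rq.span_finite[OF assms(1)] by auto
  obtain u' where u': "b = (\<Sum>v\<in>B. of_rat (u' v) * v)" using assms(4) rq.span_finite[OF assms(2)] by auto
  have "a * b = (\<Sum>v\<in>A. \<Sum>w\<in>B. of_rat (u v * u' w) * (v * w))"
    by (simp add: u u' sum_distrib_left sum_distrib_right of_rat_mult algebra_simps)
  also have "\<dots> \<in> rq.span ((\<lambda>(v, w). v * w) ` (A \<times> B))"
    by (intro rq.span_sum rq.span_scale rq.span_base) auto
  finally show ?thesis .
qed

lemma algebraic_add_mult: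
  fixes x y :: complex
  assumes "algebraic x" "algebraic y"
  shows "algebraic (x + y)" "algebraic (x * y)"
proof -
  obtain d c where dc: "x ^ d = (\<Sum>i<d. of_rat (c i) * x ^ i)" using alg_monic[OF assms(1)] by blast
  obtain e c' where ec: "y ^ e = (\<Sum>i<e. of_rat (c' i) * y ^ i)" using alg_monic[OF assms(2)] by blast
  define S where "S = (\<lambda>(v, w). v * w) ` ((\<lambda>i. x ^ i) ` {..<d} \<times> (\<lambda>i. y ^ i) ` {..<e})"
  have fS: "finite S" by (simp add: S_def)
  have xy: "x ^ i * y ^ l \<in> rq.span S" for i l
    unfolding S_def by (intro span_prod span_powers[OF dc] span_powers[OF ec]) auto
  show "algebraic (x + y)"
  proof (rule alg_from_span[OF fS])
    fix m
    have "(x + y) ^ m = (\<Sum>k\<le>m. of_rat (of_nat (m choose k)) * (x ^ k * y ^ (m - k)))"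
      by (simp add: binomial_ring algebra_simps)
    also have "\<dots> \<in> rq.span S" by (intro rq.span_sum rq.span_scale xy)
    finally show "(x + y) ^ m \<in> rq.span S" .
  qed
  show "algebraic (x * y)"
    by (rule alg_from_span[OF fS]) (simp add: power_mult_distrib xy)
qed


locale padic =
  fixes absv :: "'K::field_char_0 \<Rightarrow> real" and p :: nat
  assumes na: "nonarch_abs absv" and pabs: "absv (of_nat p) = 1 / real p"
    and pprime: "prime p" and podd: "odd p"
    and complete: "\<forall>X::nat \<Rightarrow> 'K. (\<forall>e>0. \<exists>M. \<forall>m\<ge>M. \<forall>n\<ge>M. absv (X m - X n) < e) \<longrightarrow>
        (\<exists>L. \<forall>e>0. \<exists>M. \<forall>n\<ge>M. absv (X n - L) < e)"
begin

lemma p_gt1: "p > 1" using pprime prime_gt_1_nat by blast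
lemma p_ge3: "p \<ge> 3" using p_gt1 podd by (metis One_nat_def Suc_1 Suc_lessI dvd_refl le_eq_less_or_eq numeral_3_eq_3 Suc_leI)
lemma p_real: "real p > 1" using p_gt1 by simp

lemma abs_nonneg [simp]: "0 \<le> absv x" using na unfolding nonarch_abs_def by blast
lemma abs_zero_iff [simp]: "absv x = 0 \<longleftrightarrow> x = 0" using na unfolding nonarch_abs_def by blast
lemma abs_mult: "absv (x * y) = absv x * absv y" using na unfolding nonarch_abs_def by blast
lemma abs_ultra: "absv (x + y) \<le> max (absv x) (absv y)" using na unfolding nonarch_abs_def by blast

lemma abs_zero [simp]: "absv 0 = 0" by simp
lemma abs_one [simp]: "absv 1 = 1"
proof -
  have "absv 1 = absv 1 * absv 1" using abs_mult[of 1 1] by simp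
  moreover have "absv 1 \<noteq> 0" by simp
  ultimately show ?thesis by (metis mult_cancel_left1)
qed
lemma abs_minus1: "absv (-1) = 1"
proof -
  have "absv (-1) * absv (-1) = 1" using abs_mult[of "-1" "-1"] by simp
  moreover have "0 \<le> absv (-1)" by simp
  ultimately show ?thesis
  proof (cases "absv (-1) < 1")
    case True
    moreover have "absv (-1) * absv (-1) \<le> absv (-1)"
      using True by (intro mult_left_le_one_le) auto
    ultimately have "absv (-1) * absv (-1) < 1" by linarith
    thus ?thesis using \<open>absv (-1) * absv (-1) = 1\<close> by simp
  next
    case False
    hence "absv (-1) \<ge> 1" by simp
    moreover have "absv (-1) \<le> 1"
    proof (rule ccontr)
      assume "\<not> absv (-1) \<le> 1"
      hence "1 < absv (-1)" by simp
      moreover have "absv (-1) \<le> absv (-1) * absv (-1)"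
        using \<open>1 < absv (-1)\<close> by (intro mult_le_cancel_left1[THEN iffD2]) auto
      ultimately have "1 < absv (-1) * absv (-1)" by linarith
      thus False using \<open>absv (-1) * absv (-1) = 1\<close> by simp
    qed
    ultimately show ?thesis by simp
  qed
qed
lemma abs_uminus [simp]: "absv (- x) = absv x"
  using abs_mult[of "-1" x] abs_minus1 by simp
lemma abs_diff_sym: "absv (x - y) = absv (y - x)"
  by (metis abs_uminus minus_diff_eq)
lemma abs_power: "absv (x ^ n) = absv x ^ n"
  by (induction n) (auto simp: abs_mult)
lemma abs_inverse: "absv (inverse x) = inverse (absv x)"
proof (cases "x = 0")
  case False
  hence "absv x * absv (inverse x) = 1" by (metis abs_mult abs_one right_inverse)
  thus ?thesis by (metis inverse_unique)
qed simp
lemma abs_divide: "absv (x / y) = absv x / absv y"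
  by (simp add: divide_inverse abs_mult abs_inverse)

lemma abs_add_le: "absv x \<le> B \<Longrightarrow> absv y \<le> B \<Longrightarrow> absv (x + y) \<le> B"
  using abs_ultra[of x y] by simp
lemma abs_diff_le: "absv x \<le> B \<Longrightarrow> absv y \<le> B \<Longrightarrow> absv (x - y) \<le> B"
  using abs_add_le[of x B "- y"] by simp
lemma abs_diff_trans: "absv (x - y) \<le> B \<Longrightarrow> absv (y - z) \<le> B \<Longrightarrow> absv (x - z) \<le> B"
  using abs_add_le[of "x - y" B "y - z"] by simp

lemma abs_sum_le:
  assumes "\<And>x. x \<in> A \<Longrightarrow> absv (f x) \<le> B" "0 \<le> B"
  shows "absv (sum f A) \<le> B"
  using assms
proof (induction A rule: infinite_finite_induct)
  case (insert x F) thus ?case by (simp add: abs_add_le)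
qed auto

lemma abs_of_nat_le1: "absv (of_nat n) \<le> 1"
  by (induction n) (auto intro: abs_add_le)
lemma abs_of_int_le1: "absv (of_int z) \<le> 1"
  by (cases z rule: int_cases) (auto simp: abs_of_nat_le1 simp del: of_nat_Suc)

lemma abs_strict:
  assumes "absv y < absv x" shows "absv (x + y) = absv x"
proof -
  have "absv (x + y) \<le> absv x" using abs_ultra[of x y] assms by simp
  moreover have "absv x \<le> max (absv (x + y)) (absv (- y))" using abs_ultra[of "x + y" "- y"] by simp
  ultimately show ?thesis using assms by (auto simp: max_def split: if_splits)
qed

lemma abs_p_pow: "absv (of_nat (p ^ e)) = 1 / real p ^ e"
  using pabs by (simp add: abs_power power_one_over)

lemma abs_dvd:
  assumes "int p ^ e dvd z" shows "absv (of_int z) \<le> 1 / real p ^ e"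
proof -
  obtain w where z: "z = int p ^ e * w" using assms by blast
  have "absv (of_int z) = absv (of_nat (p ^ e)) * absv (of_int w :: 'K)"
    by (simp add: z abs_mult[symmetric])
  also have "\<dots> \<le> 1 / real p ^ e" using abs_of_int_le1[of w] abs_p_pow[of e]
    by (simp add: divide_right_mono)
  finally show ?thesis .
qed

lemma abs_coprime:
  assumes "coprime z (int p)" shows "absv (of_int z :: 'K) = 1"
proof -
  obtain x y where xy: "x * z + y * int p = 1" using bezout_int[of z "int p"] assms by auto
  have "1 = absv (of_int (x * z + y * int p) :: 'K)" by (simp add: xy)
  also have "\<dots> \<le> max (absv (of_int x * of_int z :: 'K)) (absv (of_int y * of_nat p :: 'K))"
    using abs_ultra by simp
  finally have h: "1 \<le> max (absv (of_int x :: 'K) * absv (of_int z :: 'K)) (absv (of_int y :: 'K) * (1 / real p))"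
    by (simp add: abs_mult pabs)
  have "absv (of_int y :: 'K) * (1 / real p) < 1"
    using abs_of_int_le1[of y] p_real by (smt (verit) abs_nonneg divide_less_eq_1_pos mult_left_le_one_le zero_less_divide_1_iff) 
  hence "1 \<le> absv (of_int x :: 'K) * absv (of_int z :: 'K)" using h by linarith
  moreover have "absv (of_int x :: 'K) * absv (of_int z :: 'K) \<le> absv (of_int z :: 'K)"
    using abs_of_int_le1[of x] by (simp add: mult_left_le_one_le)
  ultimately show ?thesis using abs_of_int_le1[of z] by linarith
qed

lemma abs_lt1_dvd:
  assumes "absv (of_int z :: 'K) < 1" shows "int p dvd z"
proof (rule ccontr)
  assume "\<not> int p dvd z"
  moreover have "prime (int p)" using pprime by simp
  ultimately have "coprime z (int p)"
    by (metis coprime_commute prime_imp_coprime)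
  thus False using abs_coprime assms by simp
qed

lemma abs_pow_diff:
  assumes "absv x \<le> 1" "absv y \<le> 1"
  shows "absv (x ^ m - y ^ m) \<le> absv (x - y)"
proof -
  have "x ^ m - y ^ m = (x - y) * (\<Sum>i<m. y ^ (m - Suc i) * x ^ i)" by (rule power_diff_sumr2)
  moreover have "absv (\<Sum>i<m. y ^ (m - Suc i) * x ^ i) \<le> 1"
    using assms by (intro abs_sum_le) (auto simp: abs_mult abs_power intro!: mult_le_one power_le_one)
  ultimately show ?thesis by (simp add: abs_mult mult_left_le)
qed

lemma small_eq0:
  assumes "\<And>m. absv x \<le> 1 / real p ^ m" shows "x = 0"
proof (rule ccontr)
  assume "x \<noteq> 0"
  hence pos: "absv x > 0" using abs_nonneg[of x] abs_zero_iff[of x] by linarith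
  obtain m where "1 / absv x < real p ^ m" using real_arch_pow[OF p_real] by blast
  hence "1 / real p ^ m < absv x" using pos p_real
    by (metis divide_less_eq mult.commute pos_divide_less_eq zero_less_power less_trans zero_less_one)
  thus False using assms[of m] by simp
qed

lemma abs_le1_of_close:
  assumes "absv (x - y) \<le> 1" "absv y \<le> 1" shows "absv x \<le> 1"
  using abs_add_le[OF assms] by simp

lemma abs_eq1_of_pow:
  assumes "x ^ (p - 1) = 1" shows "absv x = 1"
proof -
  have "absv x ^ (p - 1) = 1 ^ (p - 1)" using assms by (simp add: abs_power[symmetric])
  thus ?thesis using p_gt1 power_eq_iff_eq_base[of "p - 1" "absv x" 1] by simp
qed

lemma euler_pow:
  assumes "coprime A p"
  shows "int p ^ Suc m dvd int (A ^ (p ^ m * (p - 1))) - 1"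
proof -
  have "coprime A (p ^ Suc m)" using assms by simp
  from euler_theorem[OF this] have "[A ^ (p ^ m * (p - 1)) = 1] (mod p ^ Suc m)"
    using totient_prime_power_Suc[OF pprime] by simp
  hence "[int (A ^ (p ^ m * (p - 1))) = int 1] (mod int (p ^ Suc m))"
    using cong_int_iff by blast
  thus ?thesis by (simp add: cong_iff_dvd_diff)
qed

lemma teich_step:
  assumes "coprime A p"
  shows "absv (of_nat (A ^ (p ^ Suc m)) - of_nat (A ^ (p ^ m)) :: 'K) \<le> 1 / real p ^ Suc m"
proof -
  have e: "p ^ Suc m = p ^ m + p ^ m * (p - 1)" using p_gt1 by (simp add: algebra_simps)
  have "int (A ^ (p ^ Suc m)) - int (A ^ (p ^ m)) = int (A ^ (p ^ m)) * (int (A ^ (p ^ m * (p - 1))) - 1)"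
    by (subst e) (simp add: power_add algebra_simps)
  hence "int p ^ Suc m dvd int (A ^ (p ^ Suc m)) - int (A ^ (p ^ m))"
    using euler_pow[OF assms, of m] by simp
  from abs_dvd[OF this] show ?thesis by simp
qed

lemma teich_cauchy:
  assumes "coprime A p" "m \<le> M"
  shows "absv (of_nat (A ^ (p ^ M)) - of_nat (A ^ (p ^ m)) :: 'K) \<le> 1 / real p ^ Suc m"
  using assms(2)
proof (induction M rule: dec_induct)
  case base thus ?case by simp
next
  case (step M)
  have "1 / real p ^ Suc M \<le> 1 / real p ^ Suc m"
    using step.hyps p_gt1 by (intro divide_left_mono power_increasing) auto
  hence h1: "absv (of_nat (A ^ (p ^ Suc M)) - of_nat (A ^ (p ^ M)) :: 'K) \<le> 1 / real p ^ Suc m"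
    using teich_step[OF assms(1), of M] by linarith
  show ?case by (rule abs_diff_trans[OF h1 step.IH])
qed

lemma small_pow: "e > 0 \<Longrightarrow> \<exists>M. 1 / real p ^ M < e"
proof -
  assume "e > 0"
  obtain M where "1 / e < real p ^ M" using real_arch_pow[OF p_real] by blast
  thus ?thesis using \<open>e > 0\<close> p_real
    by (metis divide_less_eq mult.commute zero_less_power less_trans zero_less_one pos_divide_less_eq)
qed

lemma teich_limit:
  assumes "coprime A p"
  obtains L :: 'K where "\<And>m. absv (L - of_nat (A ^ (p ^ m))) \<le> 1 / real p ^ Suc m"
proof -
  define X where "X m = (of_nat (A ^ (p ^ m)) :: 'K)" for m
  have "\<exists>M. \<forall>m\<ge>M. \<forall>n\<ge>M. absv (X m - X n) < e" if e: "e > 0" for e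
  proof -
    obtain M where M: "1 / real p ^ M < e" using small_pow[OF e] by blast
    have "1 / real p ^ Suc M \<le> 1 / real p ^ M" using p_gt1 by (intro divide_left_mono power_increasing) auto
    have "absv (X m - X n) < e" if "m \<ge> M" "n \<ge> M" for m n
    proof -
      have "absv (X m - X M) \<le> 1 / real p ^ Suc M" "absv (X M - X n) \<le> 1 / real p ^ Suc M"
        using teich_cauchy[OF assms, of M m] teich_cauchy[OF assms, of M n] that
        by (auto simp: X_def abs_diff_sym)
      hence "absv (X m - X n) \<le> 1 / real p ^ Suc M" by (rule abs_diff_trans)
      thus ?thesis using M \<open>1 / real p ^ Suc M \<le> 1 / real p ^ M\<close> by linarith
    qed
    thus ?thesis by blast
  qed
  then obtain L where L: "\<And>e. e > 0 \<Longrightarrow> \<exists>M. \<forall>n\<ge>M. absv (X n - L) < e"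
    using complete by blast
  have "absv (L - X m) \<le> 1 / real p ^ Suc m" for m
  proof (rule field_le_epsilon)
    fix e :: real assume "e > 0"
    obtain M where M: "\<forall>n\<ge>M. absv (X n - L) < e" using L[OF \<open>e > 0\<close>] by blast
    define n where "n = max M m"
    have "absv (L - X n) < e" using M by (auto simp: n_def abs_diff_sym)
    moreover have "0 \<le> 1 / real p ^ Suc m" by simp
    ultimately have "absv (L - X n) \<le> 1 / real p ^ Suc m + e" by linarith
    moreover have "absv (X n - X m) \<le> 1 / real p ^ Suc m + e"
      using teich_cauchy[OF assms, of m n] \<open>e > 0\<close> by (auto simp: n_def X_def)
    ultimately show "absv (L - X m) \<le> 1 / real p ^ Suc m + e" by (rule abs_diff_trans)
  qed
  thus ?thesis using that by (auto simp: X_def)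
qed

lemma root_unity_unique:
  assumes "z1 ^ (p - 1) = 1" "z2 ^ (p - 1) = 1" "absv (z1 - z2) < 1"
  shows "z1 = z2"
proof -
  have a1: "absv z1 = 1" and a2: "absv z2 = 1" using abs_eq1_of_pow assms by auto
  define S where "S = (\<Sum>i<p - 1. z1 ^ (p - 1 - Suc i) * z2 ^ i)"
  have "z2 ^ (p - 1) - z1 ^ (p - 1) = (z2 - z1) * S" unfolding S_def by (rule power_diff_sumr2)
  hence zero: "(z2 - z1) * S = 0" using assms by simp
  have "S = of_nat (p - 1) * z1 ^ (p - 2) + (\<Sum>i<p - 1. z1 ^ (p - 1 - Suc i) * (z2 ^ i - z1 ^ i))"
  proof -
    have "(\<Sum>i<p - 1. z1 ^ (p - 1 - Suc i) * z1 ^ i) = (\<Sum>i<p - 1. z1 ^ (p - 2))"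
      by (intro sum.cong refl) (auto simp: power_add[symmetric])
    thus ?thesis by (simp add: S_def algebra_simps sum.distrib sum_subtractf)
  qed
  moreover have "absv (of_nat (p - 1) * z1 ^ (p - 2)) = 1"
  proof -
    have "coprime (int (p - 1)) (int p)" using p_gt1
      by (metis coprime_commute coprime_diff_one_left_nat coprime_int_iff Suc_diff_1 lessI less_trans zero_less_one diff_Suc_1)
    hence "absv (of_int (int (p - 1)) :: 'K) = 1" by (rule abs_coprime)
    thus ?thesis by (simp add: abs_mult abs_power a1)
  qed
  moreover have "absv (\<Sum>i<p - 1. z1 ^ (p - 1 - Suc i) * (z2 ^ i - z1 ^ i)) \<le> absv (z1 - z2)"
    by (intro abs_sum_le) (auto simp: abs_mult abs_power a1 a2 abs_diff_sym[of z1] intro!: abs_pow_diff[THEN order_trans])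
  ultimately have "absv S = 1" using abs_strict assms(3) by force
  thus ?thesis using zero by auto
qed

lemma teich_props:
  assumes "coprime a (int p)" "0 \<le> a"
  shows "teich absv p a ^ (p - 1) = 1"
    and "\<And>m. absv (teich absv p a - of_int (a ^ (p ^ m))) \<le> 1 / real p ^ Suc m"
    and "absv (teich absv p a - of_int a) \<le> 1 / real p"
    and "absv (teich absv p a) = 1"
proof -
  define A where "A = nat a"
  have aA: "a = int A" using assms(2) by (simp add: A_def)
  have cA: "coprime A p" using assms(1) by (simp add: aA)
  obtain L :: 'K where L: "\<And>m. absv (L - of_nat (A ^ (p ^ m))) \<le> 1 / real p ^ Suc m"
    using teich_limit[OF cA] by blast
  have "1 / real p ^ Suc 0 \<le> 1" using p_real by simp
  hence "absv (L - of_nat (A ^ p ^ 0)) \<le> 1" using L[of 0] by linarith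
  hence L1: "absv L \<le> 1" by (rule abs_le1_of_close[OF _ abs_of_nat_le1])
  have Lp: "L ^ (p - 1) = 1"
  proof -
    have "absv (L ^ (p - 1) - 1) \<le> 1 / real p ^ m" for m
    proof -
      have "absv (L ^ (p - 1) - of_nat (A ^ (p ^ m)) ^ (p - 1)) \<le> 1 / real p ^ Suc m"
        using abs_pow_diff[OF L1 abs_of_nat_le1[of "A ^ p ^ m"], of "p - 1"] L[of m] by linarith
      moreover have "absv (of_nat (A ^ (p ^ m)) ^ (p - 1) - 1 :: 'K) \<le> 1 / real p ^ Suc m"
      proof -
        have "int p ^ Suc m dvd int (A ^ (p ^ m * (p - 1))) - 1" by (rule euler_pow[OF cA])
        from abs_dvd[OF this] show ?thesis by (simp add: power_mult)
      qed
      ultimately have "absv (L ^ (p - 1) - 1) \<le> 1 / real p ^ Suc m" by (rule abs_diff_trans)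
      moreover have "1 / real p ^ Suc m \<le> 1 / real p ^ m" using p_gt1
        by (intro divide_left_mono power_increasing) auto
      ultimately show ?thesis by linarith
    qed
    hence "L ^ (p - 1) - 1 = 0" by (rule small_eq0)
    thus ?thesis by simp
  qed
  have La: "absv (L - of_int a) \<le> 1 / real p" using L[of 0] by (simp add: aA)
  have "1 / real p < 1" using p_real by simp
  have uniq: "\<And>z. z ^ (p - 1) = 1 \<and> absv (z - of_int a) < 1 \<Longrightarrow> z = L"
  proof -
    fix z assume z: "z ^ (p - 1) = 1 \<and> absv (z - of_int a) < 1"
    have "absv (z - L) < 1"
    proof -
      have "absv (z - L) \<le> max (absv (z - of_int a)) (absv (of_int a - L))"
        using abs_ultra[of "z - of_int a" "of_int a - L"] by simp
      thus ?thesis using z La \<open>1 / real p < 1\<close> abs_diff_sym[of L] by auto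
    qed
    thus "z = L" using root_unity_unique z Lp by blast
  qed
  have "teich absv p a = L" unfolding teich_def
    by (rule the_equality) (use Lp La \<open>1 / real p < 1\<close> uniq in auto)
  thus "teich absv p a ^ (p - 1) = 1" "\<And>m. absv (teich absv p a - of_int (a ^ (p ^ m))) \<le> 1 / real p ^ Suc m"
    "absv (teich absv p a - of_int a) \<le> 1 / real p" "absv (teich absv p a) = 1"
    using Lp L La abs_eq1_of_pow by (auto simp: aA)
qed

lemma rp_pow_mono: "a \<le> b \<Longrightarrow> 1 / real p ^ b \<le> 1 / real p ^ a"
  using p_gt1 by (intro divide_left_mono power_increasing) auto

lemma rp_pow_strict: "a < b \<Longrightarrow> 1 / real p ^ b < 1 / real p ^ a"
  using p_real by (intro divide_strict_left_mono power_strict_increasing) auto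

lemma abs_choose_p:
  assumes "0 < i" "i < p" shows "absv (of_nat (p choose i) :: 'K) \<le> 1 / real p"
proof -
  have "p dvd (p choose i)" using dvd_choose_prime[of i p] assms pprime by auto
  hence "int p ^ 1 dvd int (p choose i)" by simp
  from abs_dvd[OF this] show ?thesis by simp
qed

lemma pow_p_lift:
  assumes "absv (y - 1) = 1 / real p ^ e" "e \<ge> 1"
  shows "absv (y ^ p - 1) = 1 / real p ^ Suc e"
proof -
  define x where "x = y - 1"
  define g where "g i = of_nat (p choose i) * x ^ i" for i
  have ax: "absv x = 1 / real p ^ e" using assms by (simp add: x_def)
  have "y ^ p = (x + 1) ^ p" by (simp add: x_def)
  also have "\<dots> = (\<Sum>i\<le>p. g i)" by (simp add: binomial_ring g_def)
  also have "{..p} = insert 0 (insert 1 {2..p})" using p_gt1 by auto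
  also have "(\<Sum>i\<in>insert 0 (insert 1 {2..p}). g i) = g 0 + (g 1 + (\<Sum>i\<in>{2..p}. g i))"
    by (simp add: sum.insert)
  finally have yp: "y ^ p - 1 = of_nat p * x + (\<Sum>i\<in>{2..p}. g i)" by (simp add: g_def)
  have apx: "absv (of_nat p * x) = 1 / real p ^ Suc e" by (simp add: abs_mult pabs ax)
  have gb: "absv (g i) \<le> 1 / real p ^ (e + 2)" if i: "i \<in> {2..p}" for i
  proof (cases "i = p")
    case True
    have "absv (g i) = (1 / real p ^ e) ^ p" by (simp add: g_def True abs_mult abs_power ax)
    also have "\<dots> = 1 / real p ^ (e * p)" by (simp add: power_mult power_one_over)
    also have "\<dots> \<le> 1 / real p ^ (e + 2)"
    proof (intro rp_pow_mono)
      have "e * 3 \<le> e * p" using p_ge3 by simp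
      thus "e + 2 \<le> e * p" using assms(2) by linarith
    qed
    finally show ?thesis .
  next
    case False
    have "absv (g i) = absv (of_nat (p choose i) :: 'K) * (1 / real p ^ e) ^ i"
      by (simp add: g_def abs_mult abs_power ax)
    also have "\<dots> \<le> (1 / real p) * (1 / real p ^ e) ^ 2"
      using abs_choose_p[of i] i False p_real
      by (intro mult_mono power_decreasing) (auto simp: power_le_one)
    also have "\<dots> = 1 / real p ^ (1 + 2 * e)"
      by (simp add: power_one_over power_add flip: power_mult power_mult_distrib) (simp add: mult.commute power_mult)
    also have "\<dots> \<le> 1 / real p ^ (e + 2)" using assms(2) by (intro rp_pow_mono) simp
    finally show ?thesis .
  qed
  have "absv (\<Sum>i\<in>{2..p}. g i) \<le> 1 / real p ^ (e + 2)" by (intro abs_sum_le gb) auto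
  also have "\<dots> < 1 / real p ^ Suc e" by (intro rp_pow_strict) simp
  finally show ?thesis unfolding yp using abs_strict apx by simp
qed

lemma pow_coprime:
  assumes "absv (y - 1) < 1" "\<not> p dvd m"
  shows "absv (y ^ m - 1) = absv (y - 1)"
proof -
  have ay: "absv y \<le> 1" using assms(1) by (intro abs_le1_of_close[of y 1]) auto
  have "y ^ m - 1 ^ m = (y - 1) * (\<Sum>i<m. 1 ^ (m - Suc i) * y ^ i)" by (rule power_diff_sumr2)
  hence e: "y ^ m - 1 = (y - 1) * (of_nat m + (\<Sum>i<m. y ^ i - 1))" by (simp add: sum_subtractf)
  have "coprime (int m) (int p)" using assms(2) pprime
    by (metis coprime_commute coprime_int_iff prime_imp_coprime)
  hence am: "absv (of_nat m :: 'K) = 1" using abs_coprime[of "int m"] by simp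
  have "absv (\<Sum>i<m. y ^ i - 1) \<le> absv (y - 1)"
    by (intro abs_sum_le) (use abs_pow_diff[OF ay, of 1] in auto)
  hence "absv (of_nat m + (\<Sum>i<m. y ^ i - 1)) = 1" using abs_strict am assms(1) by force
  thus ?thesis by (simp add: e abs_mult)
qed

context
  fixes u :: 'K
  assumes u1: "absv (u - 1) = 1 / real p"
begin

lemma abs_u: "absv u = 1"
proof -
  have "absv (1 + (u - 1)) = absv 1" using u1 p_real by (intro abs_strict) simp
  thus ?thesis by simp
qed

lemma u_pow: "0 < m \<Longrightarrow> \<exists>v. p ^ v \<le> m \<and> absv (u ^ m - 1) = 1 / real p ^ Suc v"
proof (induction m rule: less_induct)
  case (less m)
  show ?case
  proof (cases "p dvd m")
    case False
    have "absv (u ^ m - 1) = absv (u - 1)" using pow_coprime[OF _ False] u1 p_real by simp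
    thus ?thesis using less.prems u1 by (intro exI[of _ 0]) auto
  next
    case True
    then obtain m2 where m2: "m = p * m2" by blast
    have "0 < m2" "m2 < m" using less.prems p_gt1 m2 by auto
    then obtain v where v: "p ^ v \<le> m2" "absv (u ^ m2 - 1) = 1 / real p ^ Suc v" using less.IH by blast
    have "absv ((u ^ m2) ^ p - 1) = 1 / real p ^ Suc (Suc v)" using pow_p_lift[OF v(2)] by simp
    moreover have "(u ^ m2) ^ p = u ^ m" by (simp add: m2 power_mult[symmetric] mult.commute)
    moreover have "p ^ Suc v \<le> m" using v(1) m2 by simp
    ultimately show ?thesis by (intro exI[of _ "Suc v"]) auto
  qed
qed

lemma u_distinct:
  assumes "m1 < p ^ n" "m2 < p ^ n" "absv (u ^ m1 - u ^ m2) \<le> 1 / real p ^ Suc n"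
  shows "m1 = m2"
proof -
  have *: False if ab: "a < b" "b < p ^ n" "absv (u ^ b - u ^ a) \<le> 1 / real p ^ Suc n" for a b
  proof -
    obtain v where v: "p ^ v \<le> b - a" "absv (u ^ (b - a) - 1) = 1 / real p ^ Suc v"
      using u_pow[of "b - a"] ab(1) by (auto simp del: power_Suc)
    have "u ^ b - u ^ a = u ^ a * (u ^ (b - a) - 1)" using ab
      by (simp add: algebra_simps power_add[symmetric])
    hence "absv (u ^ b - u ^ a) = 1 / real p ^ Suc v" by (simp add: abs_mult abs_power abs_u v(2))
    moreover have "v < n" using v(1) ab p_gt1
      by (metis le_less_trans diff_le_self power_less_imp_less_exp)
    hence "1 / real p ^ Suc n < 1 / real p ^ Suc v" by (intro rp_pow_strict) simp
    ultimately show False using ab(3) by simp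
  qed
  show ?thesis
  proof (rule ccontr)
    assume "m1 \<noteq> m2"
    thus False using *[of m1 m2] *[of m2 m1] assms abs_diff_sym[of "u ^ m1"] by (cases "m1 < m2") auto
  qed
qed

lemma cong1_of_close:
  assumes "absv (of_int z - w) \<le> 1 / real p" "absv (w - 1) \<le> 1 / real p"
  shows "int p dvd z - 1"
proof (rule abs_lt1_dvd)
  have "absv (of_int z - 1 :: 'K) \<le> 1 / real p" using abs_diff_trans[OF assms] .
  moreover have "1 / real p < 1" using p_real by simp
  ultimately show "absv (of_int (z - 1) :: 'K) < 1" by simp
qed

lemma R_card:
  fixes n :: nat
  defines "R \<equiv> {x::int. 0 \<le> x \<and> x < int p ^ Suc n \<and> x mod int p = 1}"
  shows "finite R" "card R \<le> p ^ n"
proof -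
  have "R \<subseteq> (\<lambda>y. 1 + int p * y) ` {0..<int p ^ n}"
  proof
    fix x assume "x \<in> R"
    hence x: "0 \<le> x" "x < int p ^ Suc n" "x mod int p = 1" by (auto simp: R_def)
    have xe: "x = 1 + int p * (x div int p)" using x(3) div_mult_mod_eq[of x "int p"] by (simp add: mult.commute)
    have "0 \<le> x div int p" using x(1) by (simp add: div_int_pos_iff)
    moreover have "x div int p < int p ^ n"
    proof (rule ccontr)
      assume "\<not> x div int p < int p ^ n"
      hence "int p * int p ^ n \<le> int p * (x div int p)" by (intro mult_left_mono) auto
      thus False using x(2) xe by simp
    qed
    ultimately show "x \<in> (\<lambda>y. 1 + int p * y) ` {0..<int p ^ n}" using xe by force
  qed
  moreover have "card ((\<lambda>y. 1 + int p * y) ` {0..<int p ^ n}) \<le> p ^ n"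
    by (rule order_trans[OF card_image_le]) (auto simp del: of_nat_power simp add: of_nat_power[symmetric])
  ultimately show "finite R" "card R \<le> p ^ n" by (auto intro: finite_subset order_trans[OF card_mono])
qed

lemma mod1_of_dvd: "int p dvd z - 1 \<Longrightarrow> z mod int p = 1"
proof -
  assume "int p dvd z - 1"
  hence "z mod int p = 1 mod int p" by (simp add: mod_eq_dvd_iff)
  thus ?thesis using p_gt1 by simp
qed

lemma u_exists:
  assumes uZ: "in_Zp absv u" and w1: "absv (w - 1) \<le> 1 / real p"
    and wZ: "\<And>M. \<exists>z::int. absv (w - of_int z) \<le> 1 / real p ^ M"
  shows "\<exists>m<p ^ n. absv (u ^ m - w) \<le> 1 / real p ^ Suc n"
proof -
  have "1 / real p ^ Suc n > 0" using p_real by simp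
  then obtain U where U: "absv (u - of_int U) < 1 / real p ^ Suc n" using uZ unfolding in_Zp_def by blast
  obtain W where W: "absv (w - of_int W) \<le> 1 / real p ^ Suc n" using wZ by blast
  have rp1: "1 / real p ^ Suc n \<le> 1 / real p" using rp_pow_mono[of 1 "Suc n"] by simp
  define P where "P = int p ^ Suc n"
  have P0: "P > 0" using p_gt1 by (simp add: P_def)
  have Uclose: "absv (u ^ m - of_int (U ^ m)) \<le> 1 / real p ^ Suc n" for m
    using abs_pow_diff[of u "of_int U" m] abs_u abs_of_int_le1[of U] U by (simp del: power_Suc)
  have U1: "int p dvd U - 1"
    by (rule cong1_of_close[of _ u]) (use U rp1 u1 abs_diff_sym[of u] in auto)
  have W1: "int p dvd W - 1"
    by (rule cong1_of_close[of _ w]) (use W rp1 w1 abs_diff_sym[of w] in auto)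
  define R where "R = {x::int. 0 \<le> x \<and> x < int p ^ Suc n \<and> x mod int p = 1}"
  note Rc = R_card[of n, folded R_def]
  define phi where "phi m = U ^ m mod P" for m
  have modp: "(z mod P) mod int p = z mod int p" for z
    unfolding P_def by (rule mod_mod_cancel) simp
  have Umod: "U mod int p = 1" using U1
    by (intro mod1_of_dvd)
  have Wmod: "W mod int p = 1" using W1
    by (intro mod1_of_dvd)
  have "phi ` {..<p ^ n} \<subseteq> R"
  proof
    fix x assume "x \<in> phi ` {..<p ^ n}"
    then obtain m where x: "x = U ^ m mod P" by (auto simp: phi_def)
    have "x mod int p = (U mod int p) ^ m mod int p" by (simp add: x modp power_mod)
    also have "\<dots> = 1" using Umod p_gt1 by simp
    finally show "x \<in> R" using P0 by (simp add: R_def x P_def)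
  qed
  moreover have "inj_on phi {..<p ^ n}"
  proof
    fix m1 m2 assume m: "m1 \<in> {..<p ^ n}" "m2 \<in> {..<p ^ n}" and "phi m1 = phi m2"
    hence "P dvd U ^ m1 - U ^ m2" by (simp add: phi_def mod_eq_dvd_iff)
    hence "absv (of_int (U ^ m1 - U ^ m2) :: 'K) \<le> 1 / real p ^ Suc n"
      unfolding P_def by (rule abs_dvd)
    hence "absv (of_int (U ^ m1) - of_int (U ^ m2) :: 'K) \<le> 1 / real p ^ Suc n" by simp
    hence h: "absv (u ^ m1 - of_int (U ^ m2)) \<le> 1 / real p ^ Suc n"
      by (rule abs_diff_trans[OF Uclose[of m1]])
    have "absv (of_int (U ^ m2) - u ^ m2) \<le> 1 / real p ^ Suc n"
      using Uclose[of m2] abs_diff_sym[of "u ^ m2"] by simp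
    from abs_diff_trans[OF h this] have "absv (u ^ m1 - u ^ m2) \<le> 1 / real p ^ Suc n" .
    thus "m1 = m2" using u_distinct m by auto
  qed
  hence "card (phi ` {..<p ^ n}) = p ^ n" by (simp add: card_image)
  ultimately have "phi ` {..<p ^ n} = R" using Rc by (intro card_seteq) auto
  moreover have "W mod P \<in> R" using P0 modp[of W] Wmod by (simp add: R_def P_def)
  ultimately obtain m where m: "m < p ^ n" "U ^ m mod P = W mod P" by (auto simp: phi_def)
  hence "P dvd U ^ m - W" by (simp add: mod_eq_dvd_iff)
  hence "absv (of_int (U ^ m - W) :: 'K) \<le> 1 / real p ^ Suc n"
    unfolding P_def by (rule abs_dvd)
  hence "absv (of_int (U ^ m) - of_int W :: 'K) \<le> 1 / real p ^ Suc n" by simp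
  hence h: "absv (u ^ m - of_int W) \<le> 1 / real p ^ Suc n"
    by (rule abs_diff_trans[OF Uclose[of m]])
  have "absv (of_int W - w) \<le> 1 / real p ^ Suc n" using W abs_diff_sym[of w] by simp
  from abs_diff_trans[OF h this] have "absv (u ^ m - w) \<le> 1 / real p ^ Suc n" .
  thus ?thesis using m by blast
qed

lemma mexp_props:
  assumes uZ: "in_Zp absv u" and a: "coprime a (int p)" "0 \<le> a"
  shows "mexp absv p u n a < p ^ n"
    and "absv (u ^ mexp absv p u n a - of_int a * inverse (teich absv p a)) \<le> 1 / real p ^ Suc n"
proof -
  define z where "z = teich absv p a"
  note tp = teich_props[OF a, folded z_def]
  define w where "w = of_int a * inverse z"
  have z0: "z \<noteq> 0" using tp(4) by auto
  have invz: "inverse z = z ^ (p - 2)"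
  proof -
    have "z * z ^ (p - 2) = z ^ (p - 1)" using p_ge3 by (simp add: power_Suc[symmetric] Suc_diff_Suc numeral_2_eq_2)
    thus ?thesis using tp(1) z0 by (metis inverse_unique)
  qed
  have w1: "absv (w - 1) \<le> 1 / real p"
  proof -
    have "w - 1 = (of_int a - z) * inverse z" using z0 by (simp add: w_def field_simps)
    thus ?thesis using tp(3) abs_diff_sym[of z] by (simp add: abs_mult abs_inverse tp(4))
  qed
  have wZ: "\<exists>zz::int. absv (w - of_int zz) \<le> 1 / real p ^ M" for M
  proof -
    have "absv (z ^ (p - 2) - of_int (a ^ p ^ M) ^ (p - 2)) \<le> absv (z - of_int (a ^ p ^ M))"
      using tp(4) abs_of_int_le1[of "a ^ p ^ M"] by (intro abs_pow_diff) auto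
    also have "\<dots> \<le> 1 / real p ^ Suc M" by (rule tp(2))
    also have "\<dots> \<le> 1 / real p ^ M" by (rule rp_pow_mono) simp
    finally have "absv (w - of_int (a * (a ^ p ^ M) ^ (p - 2))) \<le> 1 / real p ^ M"
      unfolding w_def invz using abs_of_int_le1[of a]
      by (simp add: abs_mult right_diff_distrib[symmetric] mult_le_one order_trans[OF mult_left_le_one_le])
    thus ?thesis by blast
  qed
  have ex: "\<exists>!m. m < p ^ n \<and> absv (u ^ m - w) \<le> 1 / real p ^ (n + 1)"
  proof -
    obtain m where m: "m < p ^ n" "absv (u ^ m - w) \<le> 1 / real p ^ Suc n" using u_exists[OF uZ w1 wZ] by blast
    moreover have "m' = m" if "m' < p ^ n" "absv (u ^ m' - w) \<le> 1 / real p ^ (n + 1)" for m'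
      using that m abs_diff_sym[of w] by (intro u_distinct[of m' n m]) (auto intro: abs_diff_trans)
    ultimately show ?thesis by auto
  qed
  have "mexp absv p u n a < p ^ n \<and> absv (u ^ mexp absv p u n a - w) \<le> 1 / real p ^ (n + 1)"
    unfolding mexp_def w_def[symmetric] z_def[symmetric] by (rule theI'[OF ex])
  thus "mexp absv p u n a < p ^ n"
    "absv (u ^ mexp absv p u n a - of_int a * inverse (teich absv p a)) \<le> 1 / real p ^ Suc n"
    by (auto simp: w_def z_def)
qed

end

end

lemma pow_le_exp:
  fixes y :: real assumes "0 \<le> y" shows "y ^ n / fact n \<le> exp y"
proof -
  define f where "f i = inverse (fact i) * y ^ i" for i
  have "sum f {n} \<le> suminf f"
    by (rule sum_le_suminf) (use summable_exp[of y] assms in \<open>auto simp: f_def[abs_def]\<close>)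
  moreover have "suminf f = exp y" by (simp add: f_def[abs_def] exp_def divide_inverse ac_simps)
  ultimately show ?thesis by (simp add: f_def divide_inverse ac_simps)
qed

lemma Im_h_div:
  fixes h :: real
  shows "Im (of_real h * z / (2 * of_real pi * \<i>)) = - h * Re z / (2 * pi)"
  by (simp add: Im_divide field_simps power2_eq_square)

lemma norm_expc:
  fixes h :: real
  shows "norm (exp (2 * of_real pi * \<i> * w / of_real h)) = exp (- 2 * pi * Im w / h)"
  by (simp add: norm_exp_eq_Re Re_divide field_simps power2_eq_square)

context
  fixes F :: "complex \<Rightarrow> complex" and h :: real
  assumes hol: "F holomorphic_on upper_half" and hpos: "h > 0"
    and per: "\<And>w. w \<in> upper_half \<Longrightarrow> F (w + of_real h) = F w"
begin

lemma per_nat: "w \<in> upper_half \<Longrightarrow> F (w + of_nat n * of_real h) = F w"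
proof (induction n)
  case (Suc n)
  have "w + of_nat n * of_real h \<in> upper_half" using Suc.prems by (simp add: upper_half_def)
  from per[OF this] Suc show ?case by (simp add: algebra_simps)
qed simp

lemma per_int: "w \<in> upper_half \<Longrightarrow> F (w + of_int n * of_real h) = F w"
proof (cases "n \<ge> 0")
  case True
  assume "w \<in> upper_half"
  thus ?thesis using per_nat[of w "nat n"] True by simp
next
  case False
  assume w: "w \<in> upper_half"
  define m where "m = nat (- n)"
  have n: "of_int n = - (of_nat m :: complex)" using False by (simp add: m_def)
  have w': "w - of_nat m * of_real h \<in> upper_half" using w by (simp add: upper_half_def)
  from per_nat[OF w', of m] show ?thesis by (simp add: n)
qed

lemma per_exp:
  assumes "w \<in> upper_half" "w' \<in> upper_half"
    and "exp (2 * of_real pi * \<i> * w' / of_real h) = exp (2 * of_real pi * \<i> * w / of_real h)"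
  shows "F w' = F w"
proof -
  obtain n :: int where n: "2 * of_real pi * \<i> * w' / of_real h = 2 * of_real pi * \<i> * w / of_real h + of_real (of_int (2 * n) * pi) * \<i>"
    using assms(3) unfolding exp_eq by blast
  hence "(2 * of_real pi * \<i>) * (w' - (w + of_int n * of_real h)) = 0" using hpos by (simp add: field_simps)
  hence "w' = w + of_int n * of_real h" by simp
  thus ?thesis using per_int[OF assms(1)] by simp
qed

definition gq :: "complex \<Rightarrow> complex" where
  "gq q = (if q = 0 then 0 else F (of_real h * Ln q / (2 * of_real pi * \<i>)))"

lemma phi1_H:
  assumes "q \<noteq> 0" "norm q < 1"
  shows "of_real h * Ln q / (2 * of_real pi * \<i>) \<in> upper_half"
proof -
  have "ln (norm q) < 0" using assms by simp
  hence "0 < h * (- ln (norm q)) / (2 * pi)" using hpos by (intro divide_pos_pos mult_pos_pos) auto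
  thus ?thesis using assms by (simp add: upper_half_def Im_h_div Re_Ln)
qed

lemma gq_eq:
  assumes "w \<in> upper_half" "exp (2 * of_real pi * \<i> * w / of_real h) = q"
  shows "gq q = F w"
proof -
  have nq: "norm q < 1" using assms hpos by (auto simp: norm_expc[symmetric] upper_half_def)
  have q0: "q \<noteq> 0" using assms(2) by auto
  have "gq q = F (of_real h * Ln q / (2 * of_real pi * \<i>))" using q0 by (simp add: gq_def)
  also have "\<dots> = F w"
    by (rule per_exp[OF assms(1) phi1_H[OF q0 nq]]) (use q0 hpos assms(2) in simp)
  finally show ?thesis .
qed

lemma gq_hol_local:
  assumes U: "open U" and phi: "phi holomorphic_on U"
    and phiH: "\<And>q. q \<in> U \<Longrightarrow> phi q \<in> upper_half"
    and phiE: "\<And>q. q \<in> U \<Longrightarrow> exp (2 * of_real pi * \<i> * phi q / of_real h) = q"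
  shows "gq holomorphic_on U"
proof -
  have "(F \<circ> phi) holomorphic_on U"
    by (rule holomorphic_on_compose_gen[OF phi hol]) (use phiH in auto)
  moreover have "(F \<circ> phi) q = gq q" if "q \<in> U" for q
    using gq_eq[OF phiH[OF that] phiE[OF that]] by simp
  ultimately show ?thesis using holomorphic_transform by metis
qed

lemma gq_hol_punct: "gq holomorphic_on (ball 0 1 - {0})"
proof -
  define U1 where "U1 = ball (0::complex) 1 - \<real>\<^sub>\<le>\<^sub>0"
  define U2 where "U2 = ball (0::complex) 1 - uminus ` \<real>\<^sub>\<le>\<^sub>0"
  have "gq holomorphic_on U1"
  proof (rule gq_hol_local[of _ "\<lambda>q. of_real h * Ln q / (2 * of_real pi * \<i>)"])
    show "open U1" unfolding U1_def by (intro open_Diff) auto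
    show "(\<lambda>q. of_real h * Ln q / (2 * of_real pi * \<i>)) holomorphic_on U1"
      unfolding U1_def by (intro holomorphic_intros) auto
  next
    fix q assume q: "q \<in> U1"
    hence "q \<noteq> 0" "norm q < 1" by (auto simp: U1_def)
    thus "of_real h * Ln q / (2 * of_real pi * \<i>) \<in> upper_half" by (rule phi1_H)
    show "exp (2 * of_real pi * \<i> * (of_real h * Ln q / (2 * of_real pi * \<i>)) / of_real h) = q"
      using \<open>q \<noteq> 0\<close> hpos by simp
  qed
  moreover have "gq holomorphic_on U2"
  proof (rule gq_hol_local[of _ "\<lambda>q. of_real h * (Ln (- q) + of_real pi * \<i>) / (2 * of_real pi * \<i>)"])
    have "closed (uminus ` (\<real>\<^sub>\<le>\<^sub>0 :: complex set))" by (intro closed_negations) simp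
    thus "open U2" unfolding U2_def by (intro open_Diff) auto
    have "(\<lambda>q. Ln (- q)) holomorphic_on U2"
    proof (rule holomorphic_on_compose_gen[of uminus _ Ln "- (\<real>\<^sub>\<le>\<^sub>0)", unfolded o_def])
      show "uminus holomorphic_on U2" by (intro holomorphic_intros)
      show "Ln holomorphic_on - \<real>\<^sub>\<le>\<^sub>0" by (intro holomorphic_intros) auto
      show "uminus ` U2 \<subseteq> - \<real>\<^sub>\<le>\<^sub>0"
      proof clarify
        fix x assume x: "x \<in> U2" "- x \<in> \<real>\<^sub>\<le>\<^sub>0"
        hence "x \<in> uminus ` \<real>\<^sub>\<le>\<^sub>0" by (intro image_eqI[of _ _ "- x"]) auto
        thus False using x(1) by (simp add: U2_def)
      qed
    qed
    have nn: "z \<notin> \<real>\<^sub>\<ge>\<^sub>0" if "z \<in> U2" for z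
    proof
      assume "z \<in> \<real>\<^sub>\<ge>\<^sub>0"
      hence "- z \<in> \<real>\<^sub>\<le>\<^sub>0" by (auto simp: nonpos_Reals_def nonneg_Reals_def)
      hence "z \<in> uminus ` \<real>\<^sub>\<le>\<^sub>0" by (intro image_eqI[of _ _ "- z"]) auto
      thus False using that by (simp add: U2_def)
    qed
    show "(\<lambda>q. of_real h * (Ln (- q) + of_real pi * \<i>) / (2 * of_real pi * \<i>)) holomorphic_on U2"
      using nn by (intro holomorphic_intros) auto
  next
    fix q assume q: "q \<in> U2"
    have q0: "q \<noteq> 0" using q by (auto simp: U2_def)
    have nq: "norm q < 1" using q by (auto simp: U2_def)
    have "ln (norm q) < 0" using q0 nq by simp
    hence "0 < h * (- ln (norm q)) / (2 * pi)" using hpos by (intro divide_pos_pos mult_pos_pos) auto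
    thus "of_real h * (Ln (- q) + of_real pi * \<i>) / (2 * of_real pi * \<i>) \<in> upper_half"
      using q0 by (simp add: upper_half_def Im_h_div Re_Ln)
    have "exp (Ln (- q) + of_real pi * \<i>) = q" using q0 by (simp add: exp_add exp_pi_i')
    thus "exp (2 * of_real pi * \<i> * (of_real h * (Ln (- q) + of_real pi * \<i>) / (2 * of_real pi * \<i>)) / of_real h) = q"
      using hpos by simp
  qed
  moreover have "ball 0 1 - {0} = U1 \<union> U2"
  proof -
    have "q = 0" if "q \<in> \<real>\<^sub>\<le>\<^sub>0" "q \<in> uminus ` \<real>\<^sub>\<le>\<^sub>0" for q :: complex
      using that by (auto simp: nonpos_Reals_def)
    thus ?thesis unfolding U1_def U2_def by auto
  qed
  moreover have "open U1" "open U2" unfolding U1_def U2_def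
    by (auto intro!: open_Diff closed_negations)
  ultimately show ?thesis by (metis holomorphic_on_Un)
qed

lemma gq_hol:
  assumes lim: "\<forall>e>0. \<exists>Y. \<forall>w. Y < Im w \<longrightarrow> norm (F w) < e"
  shows "gq holomorphic_on ball 0 1"
proof (rule no_isolated_singularity'[of "{0}"])
  show "gq holomorphic_on ball 0 1 - {0}" by (rule gq_hol_punct)
  show "open (ball (0::complex) 1)" "finite {0::complex}" by auto
  fix z :: complex assume "z \<in> {0}"
  hence z: "z = 0" by simp
  have "(gq \<longlongrightarrow> 0) (at 0)"
    unfolding LIM_eq
  proof (intro allI impI)
    fix r :: real assume "r > 0"
    then obtain Y where Y: "\<And>w. Y < Im w \<Longrightarrow> norm (F w) < r" using lim by blast
    define Y' where "Y' = max Y 0 + 1"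
    define s where "s = exp (- 2 * pi * Y' / h)"
    have s0: "s > 0" by (simp add: s_def)
    have s1: "s < 1" using hpos by (simp add: s_def Y'_def)
    have "norm (gq x - 0) < r" if x: "x \<noteq> 0" "norm (x - 0) < s" for x
    proof -
      have nx: "norm x < 1" using x s1 by simp
      have "gq x = F (of_real h * Ln x / (2 * of_real pi * \<i>))" using x by (simp add: gq_def)
      moreover have "Y < Im (of_real h * Ln x / (2 * of_real pi * \<i>))"
      proof -
        have "ln (norm x) < ln s" using x s0 by (intro ln_less_cancel_iff[THEN iffD2]) auto
        hence "ln (norm x) < - 2 * pi * Y' / h" by (simp add: s_def)
        hence "- ln (norm x) * h > 2 * pi * Y'" using hpos by (simp add: field_simps)
        hence "- h * ln (norm x) / (2 * pi) > Y'" by (simp add: field_simps)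
        thus ?thesis using x by (simp add: Im_h_div Re_Ln Y'_def)
      qed
      ultimately show ?thesis using Y by simp
    qed
    thus "\<exists>s>0. \<forall>x. x \<noteq> 0 \<and> norm (x - 0) < s \<longrightarrow> norm (gq x - 0) < r" using s0 by blast
  qed
  thus "(gq \<longlongrightarrow> gq z) (at z within ball 0 1)"
    using z by (simp add: gq_def tendsto_within_subset[OF _ subset_UNIV])
qed

lemma periodic_decay:
  assumes lim: "\<forall>e>0. \<exists>Y. \<forall>w. Y < Im w \<longrightarrow> norm (F w) < e"
  shows "\<exists>C Y. \<forall>w. Y \<le> Im w \<longrightarrow> norm (F w) \<le> C * exp (- 2 * pi * Im w / h)"
proof -
  have holg: "gq holomorphic_on ball 0 1" by (rule gq_hol[OF lim])
  have "compact (gq ` cball 0 (1/2))"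
    by (intro compact_continuous_image holomorphic_on_imp_continuous_on
        holomorphic_on_subset[OF holg]) auto
  then obtain M where M: "\<And>q. q \<in> cball 0 (1/2) \<Longrightarrow> norm (gq q) \<le> M"
    using compact_imp_bounded bounded_iff by (metis imageI)
  have M0: "M \<ge> 0" using M[of 0] by (simp add: gq_def)
  define Mx where "Mx = M + 1"
  have Mx0: "Mx > 0" using M0 by (simp add: Mx_def)
  define G where "G z = gq (z / 2) / of_real Mx" for z
  have bnd: "norm (gq q) \<le> 2 * Mx * norm q" if q: "norm q < 1/2" for q
  proof -
    have "G holomorphic_on ball 0 1" unfolding G_def
      by (intro holomorphic_intros holomorphic_on_compose_gen[OF _ holg, unfolded o_def]) (auto simp: Mx0)
    moreover have "G 0 = 0" by (simp add: G_def gq_def)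
    moreover have "norm (G z) < 1" if "norm z < 1" for z
    proof -
      have "norm (gq (z / 2)) \<le> M" using that by (intro M) (auto simp: norm_divide)
      thus ?thesis using Mx0 by (simp add: G_def norm_divide Mx_def)
    qed
    moreover have "norm (2 * q) < 1" using q by simp
    ultimately have "norm (G (2 * q)) \<le> norm (2 * q)" by (intro Schwarz_Lemma(1)) auto
    thus ?thesis using Mx0 by (simp add: G_def norm_divide field_simps)
  qed
  have "norm (F w) \<le> 2 * Mx * exp (- 2 * pi * Im w / h)" if w: "h \<le> Im w" for w
  proof -
    define q where "q = exp (2 * of_real pi * \<i> * w / of_real h)"
    have wH: "w \<in> upper_half" using w hpos by (simp add: upper_half_def)
    have nq: "norm q = exp (- 2 * pi * Im w / h)" by (simp add: q_def norm_expc)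
    have "exp (- 2 * pi * Im w / h) \<le> exp (- 2 * pi)"
      using w hpos by (simp add: field_simps)
    also have "exp (- 2 * pi) < 1 / 2"
    proof -
      have "2 < 1 + 2 * pi" using pi_gt3 by simp
      also have "\<dots> \<le> exp (2 * pi)" by (rule exp_ge_add_one_self)
      finally show ?thesis by (simp add: exp_minus field_simps)
    qed
    finally have "norm q < 1/2" using nq by simp
    hence "norm (gq q) \<le> 2 * Mx * norm q" by (rule bnd)
    moreover have "gq q = F w" using gq_eq[OF wH] q_def by simp
    ultimately show ?thesis using nq by simp
  qed
  thus ?thesis by blast
qed

end


lemma moeb_Im:
  assumes "a * d - b * c = 1"
  shows "Im (moeb a b c d w) = Im w / (norm (of_int c * w + of_int d))\<^sup>2"
proof -
  have "Im (of_int a * w + of_int b) * Re (of_int c * w + of_int d) - Re (of_int a * w + of_int b) * Im (of_int c * w + of_int d)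
        = of_int (a * d - b * c) * Im w"
    by (simp add: algebra_simps)
  thus ?thesis using assms by (simp add: moeb_def Im_divide' )
qed

lemma denom_nz:
  assumes "a * d - b * c = 1" "w \<in> upper_half"
  shows "of_int c * w + of_int d \<noteq> 0"
proof
  assume h: "of_int c * w + of_int d = 0"
  hence "Im (of_int c * w + of_int d) = 0" by simp
  hence "c = 0" using assms(2) by (simp add: upper_half_def)
  hence "d = 0" using h by simp
  thus False using assms(1) \<open>c = 0\<close> by simp
qed

lemma moeb_H:
  assumes "a * d - b * c = 1" "w \<in> upper_half"
  shows "moeb a b c d w \<in> upper_half"
  using assms moeb_Im[OF assms(1), of w] denom_nz[OF assms]
  by (simp add: upper_half_def)

lemma eps_per:
  assumes "dirichlet_char N \<epsilon>"
  shows "\<epsilon> (m + int N * t) = \<epsilon> m"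
proof -
  have P: "\<And>m. \<epsilon> (m + int N) = \<epsilon> m" using assms by (simp add: dirichlet_char_def)
  have nat: "\<epsilon> (m + int N * int n) = \<epsilon> m" for m n
  proof (induction n)
    case (Suc n)
    have "\<epsilon> (m + int N * int (Suc n)) = \<epsilon> ((m + int N * int n) + int N)" by (simp add: algebra_simps)
    also have "\<dots> = \<epsilon> (m + int N * int n)" by (rule P)
    finally show ?case using Suc by simp
  qed simp
  show ?thesis
  proof (cases "t \<ge> 0")
    case True thus ?thesis using nat[of m "nat t"] by simp
  next
    case False
    have "\<epsilon> (m + int N * t + int N * int (nat (- t))) = \<epsilon> (m + int N * t)" by (rule nat)
    thus ?thesis using False by (simp add: algebra_simps)
  qed
qed

context
  fixes k N :: nat and \<epsilon> :: "int \<Rightarrow> complex" and f :: "complex \<Rightarrow> complex"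
  assumes cf: "cusp_form k N \<epsilon> f" and dc: "dirichlet_char N \<epsilon>" and N1: "1 \<le> N"
begin

definition slash :: "int \<Rightarrow> int \<Rightarrow> int \<Rightarrow> int \<Rightarrow> complex \<Rightarrow> complex" where
  "slash a b c d w = f (moeb a b c d w) / (of_int c * w + of_int d) ^ k"

lemma f_hol: "f holomorphic_on upper_half" using cf by (simp add: cusp_form_def)

lemma slash_hol:
  assumes "a * d - b * c = 1"
  shows "slash a b c d holomorphic_on upper_half"
proof -
  have m: "moeb a b c d holomorphic_on upper_half"
    unfolding moeb_def[abs_def] using denom_nz[OF assms] by (intro holomorphic_intros) auto
  have "(f \<circ> moeb a b c d) holomorphic_on upper_half"
    by (rule holomorphic_on_compose_gen[OF m f_hol]) (use moeb_H[OF assms] in auto)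
  thus ?thesis unfolding slash_def[abs_def] using denom_nz[OF assms]
    by (intro holomorphic_intros) (auto simp: o_def)
qed

lemma slash_per:
  assumes det: "a * d - b * c = 1" and w: "w \<in> upper_half"
  shows "slash a b c d (w + of_nat N) = slash a b c d w"
proof -
  define A' B' C' D' where "A' = 1 - int N * a * c" "B' = int N * a ^ 2" "C' = - (int N * c ^ 2)" "D' = 1 + int N * a * c"
  have detd: "A' * D' - B' * C' = 1" by (simp add: A'_B'_C'_D'_def algebra_simps power2_eq_square)
  have Nd: "int N dvd C'" by (simp add: A'_B'_C'_D'_def)
  define z where "z = moeb a b c d w"
  have zH: "z \<in> upper_half" using moeb_H[OF det w] by (simp add: z_def)
  have wN: "w + of_nat N \<in> upper_half" using w by (simp add: upper_half_def)
  have d0: "of_int c * w + of_int d \<noteq> 0" by (rule denom_nz[OF det w])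
  have d1: "of_int c * (w + of_nat N) + of_int d \<noteq> 0" by (rule denom_nz[OF det wN])
  have tr: "f (moeb A' B' C' D' z) = \<epsilon> D' * (of_int C' * z + of_int D') ^ k * f z"
    using cf detd Nd zH unfolding cusp_form_def by blast
  have eD: "\<epsilon> D' = 1"
    using eps_per[OF dc, of 1 "a * c"] dc by (simp add: A'_B'_C'_D'_def dirichlet_char_def algebra_simps)
  have adc: "(of_int a * of_int d :: complex) = 1 + of_int b * of_int c"
  proof -
    have "a * d = 1 + b * c" using det by simp
    hence "(of_int (a * d) :: complex) = of_int (1 + b * c)" by simp
    thus ?thesis by simp
  qed
  have Nf: "of_int a * of_int d - 1 - of_int b * of_int c = (0::complex)" using adc by simp
  have den_num: "of_int C' * (of_int a * w + of_int b) + of_int D' * (of_int c * w + of_int d)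
      = of_int c * (w + of_nat N) + (of_int d :: complex)"
  proof -
    have "of_int C' * (of_int a * w + of_int b) + of_int D' * (of_int c * w + of_int d)
        - (of_int c * (w + of_nat N) + of_int d)
        = of_nat N * of_int c * (of_int a * of_int d - 1 - of_int b * of_int c :: complex)"
      by (simp add: A'_B'_C'_D'_def algebra_simps power2_eq_square)
    thus ?thesis using Nf by simp
  qed
  have num_num: "of_int A' * (of_int a * w + of_int b) + of_int B' * (of_int c * w + of_int d)
      = of_int a * (w + of_nat N) + (of_int b :: complex)"
  proof -
    have "of_int A' * (of_int a * w + of_int b) + of_int B' * (of_int c * w + of_int d)
        - (of_int a * (w + of_nat N) + of_int b)
        = of_nat N * of_int a * (of_int a * of_int d - 1 - of_int b * of_int c :: complex)"
      by (simp add: A'_B'_C'_D'_def algebra_simps power2_eq_square)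
    thus ?thesis using Nf by simp
  qed
  have den: "of_int C' * z + of_int D' = (of_int c * (w + of_nat N) + of_int d) / (of_int c * w + of_int d)"
  proof -
    have "of_int C' * z + of_int D' = (of_int C' * (of_int a * w + of_int b) + of_int D' * (of_int c * w + of_int d)) / (of_int c * w + of_int d)"
      using d0 unfolding z_def moeb_def by (simp add: field_simps)
    thus ?thesis by (simp only: den_num)
  qed
  have numr: "of_int A' * z + of_int B' = (of_int a * (w + of_nat N) + of_int b) / (of_int c * w + of_int d)"
  proof -
    have "of_int A' * z + of_int B' = (of_int A' * (of_int a * w + of_int b) + of_int B' * (of_int c * w + of_int d)) / (of_int c * w + of_int d)"
      using d0 unfolding z_def moeb_def by (simp add: field_simps)
    thus ?thesis by (simp only: num_num)
  qed
  have num: "moeb A' B' C' D' z = moeb a b c d (w + of_nat N)"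
    unfolding moeb_def[of A'] using d0 d1 by (simp add: numr den moeb_def)
  have "slash a b c d (w + of_nat N) = f (moeb A' B' C' D' z) / (of_int c * (w + of_nat N) + of_int d) ^ k"
    by (simp add: slash_def num)
  also have "\<dots> = f z / (of_int c * w + of_int d) ^ k"
    using d0 d1 by (simp add: tr eD den power_divide)
  finally show ?thesis by (simp add: slash_def z_def)
qed

lemma slash_decay:
  assumes det: "a * d - b * c = 1"
  shows "\<exists>C Y. \<forall>w. Y \<le> Im w \<longrightarrow> norm (slash a b c d w) \<le> C * exp (- 2 * pi * Im w / real N)"
proof -
  have lim: "\<forall>e>0. \<exists>Y. \<forall>w. Y < Im w \<longrightarrow> norm (slash a b c d w) < e"
  proof -
    have c3: "\<forall>a b c d. a * d - b * c = 1 \<longrightarrow> (\<forall>e>0. \<exists>Y. \<forall>z. Y < Im z \<longrightarrow>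
            norm (f (moeb a b c d z) / (of_int c * z + of_int d) ^ k) < e)"
      using cf unfolding cusp_form_def by (elim conjE)
    show ?thesis unfolding slash_def using c3[rule_format, OF det] by blast
  qed
  have "real N > 0" using N1 by simp
  from periodic_decay[OF slash_hol[OF det] this _ lim] slash_per[OF det]
  show ?thesis by simp
qed

lemma near_cusp_bound:
  fixes \<alpha> c :: int
  assumes c: "c > 0" and cop: "coprime \<alpha> c"
  shows "\<exists>t0>0. \<exists>M. \<forall>t. 0 < t \<and> t \<le> t0 \<longrightarrow>
           norm (f (of_real (of_int \<alpha> / of_int c) + \<i> * of_real t)) \<le> M"
proof -
  obtain u v where uv: "u * \<alpha> + v * c = 1" using bezout_int[of \<alpha> c] cop by auto
  define d \<beta> where "d = u" "\<beta> = - v"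
  have det: "\<alpha> * d - \<beta> * c = 1" using uv by (simp add: d_\<beta>_def algebra_simps)
  obtain C Y where CY: "\<And>w. Y \<le> Im w \<Longrightarrow> norm (slash \<alpha> \<beta> c d w) \<le> C * exp (- 2 * pi * Im w / real N)"
    using slash_decay[OF det] by blast
  define Y1 where "Y1 = max Y 1"
  define t0 where "t0 = 1 / (real_of_int c ^ 2 * Y1)"
  define A where "A = 2 * pi / (real N * real_of_int c ^ 2)"
  have A0: "A > 0" using c N1 by (simp add: A_def)
  have t00: "t0 > 0" using c by (simp add: t0_def Y1_def)
  have adc: "(of_int \<alpha> * of_int d :: complex) = 1 + of_int \<beta> * of_int c"
  proof -
    have "\<alpha> * d = 1 + \<beta> * c" using det by simp
    hence "(of_int (\<alpha> * d) :: complex) = of_int (1 + \<beta> * c)" by simp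
    thus ?thesis by simp
  qed
  have "norm (f (of_real (of_int \<alpha> / of_int c) + \<i> * of_real t)) \<le> \<bar>C\<bar> * fact k / (A * of_int c) ^ k"
    if t: "0 < t" "t \<le> t0" for t
  proof -
    define w where "w = - of_int d / of_int c + \<i> / (of_int c ^ 2 * of_real t)"
    define z where "z = of_real (of_int \<alpha> / of_int c) + \<i> * of_real t"
    have c0: "(of_int c :: complex) \<noteq> 0" using c by simp
    have t0': "(of_real t :: complex) \<noteq> 0" using t by simp
    have Imw: "Im w = 1 / (real_of_int c ^ 2 * t)"
      by (simp add: w_def Im_divide power2_eq_square field_simps)
    have den: "of_int c * w + of_int d = \<i> / (of_int c * of_real t)"
      using c0 t0' by (simp add: w_def field_simps power2_eq_square)
    have mz: "moeb \<alpha> \<beta> c d w = z"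
    proof -
      have "of_int \<alpha> * w + of_int \<beta> = (- (of_int \<alpha> * of_int d) + of_int \<beta> * of_int c) / of_int c
              + \<i> * of_int \<alpha> / (of_int c ^ 2 * of_real t)"
        using c0 t0' unfolding w_def by (simp add: field_simps power2_eq_square)
      also have "\<dots> = (- 1 + \<i> * of_int \<alpha> / (of_int c * of_real t)) / of_int c"
        unfolding adc using c0 t0' by (simp add: field_simps power2_eq_square)
      finally have "of_int \<alpha> * w + of_int \<beta> = (- 1 + \<i> * of_int \<alpha> / (of_int c * of_real t)) / of_int c" .
      hence "moeb \<alpha> \<beta> c d w = ((- 1 + \<i> * of_int \<alpha> / (of_int c * of_real t)) / of_int c) / (\<i> / (of_int c * of_real t))"
        by (simp add: moeb_def den)
      also have "\<dots> = z" unfolding z_def using c0 t0'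
        by (simp add: field_simps)
      finally show ?thesis .
    qed
    have Yw: "Y \<le> Im w"
    proof -
      have "real_of_int c ^ 2 * t \<le> real_of_int c ^ 2 * t0" using t c by (intro mult_left_mono) auto
      also have "\<dots> = 1 / Y1" using c by (simp add: t0_def Y1_def)
      finally have "real_of_int c ^ 2 * t \<le> 1 / Y1" .
      moreover have Y1p: "Y1 > 0" by (simp add: Y1_def)
      ultimately have "real_of_int c ^ 2 * t * Y1 \<le> 1" by (simp add: le_divide_eq)
      moreover have "real_of_int c ^ 2 * t > 0" using t c by simp
      ultimately have "Y1 \<le> 1 / (real_of_int c ^ 2 * t)" by (simp add: le_divide_eq mult.commute)
      thus ?thesis using Imw by (simp add: Y1_def)
    qed
    have fz: "f z = slash \<alpha> \<beta> c d w * (of_int c * w + of_int d) ^ k"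
      using den c0 t0' by (simp add: slash_def mz)
    have "norm (f z) = norm (slash \<alpha> \<beta> c d w) / (of_int c * t) ^ k"
      using c t by (simp add: fz den norm_mult norm_divide norm_power power_divide abs_mult)
    also have "\<dots> \<le> \<bar>C\<bar> * exp (- (A / t)) / (of_int c * t) ^ k"
    proof (intro divide_right_mono)
      have "norm (slash \<alpha> \<beta> c d w) \<le> C * exp (- 2 * pi * Im w / real N)" by (rule CY[OF Yw])
      also have "- 2 * pi * Im w / real N = - (A / t)" using c t N1 by (simp add: Imw A_def field_simps)
      finally show "norm (slash \<alpha> \<beta> c d w) \<le> \<bar>C\<bar> * exp (- (A / t))"
        by (smt (verit) exp_gt_zero mult_right_mono abs_ge_self)
    qed (use c t in auto)
    also have "\<dots> \<le> \<bar>C\<bar> * fact k / (A * of_int c) ^ k"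
    proof -
      have "(A / t) ^ k / fact k \<le> exp (A / t)" using A0 t by (intro pow_le_exp) auto
      hence "exp (- (A / t)) \<le> fact k / (A / t) ^ k" using A0 t
        by (simp add: exp_minus field_simps)
      hence "exp (- (A / t)) / (of_int c * t) ^ k \<le> fact k / (A / t) ^ k / (of_int c * t) ^ k"
        using c t by (intro divide_right_mono) auto
      also have "fact k / (A / t) ^ k / (of_int c * t) ^ k = fact k / (A * of_int c) ^ k"
        using t c A0 by (simp add: power_divide power_mult_distrib field_simps)
      finally have h: "exp (- (A / t)) / (of_int c * t) ^ k \<le> fact k / (A * of_int c) ^ k" .
      have "\<bar>C\<bar> * (exp (- (A / t)) / (of_int c * t) ^ k) \<le> \<bar>C\<bar> * (fact k / (A * of_int c) ^ k)"
        by (rule mult_left_mono[OF h]) simp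
      thus ?thesis by simp
    qed
    finally show ?thesis by (simp add: z_def)
  qed
  thus ?thesis using t00 by blast
qed

lemma inf_bound: "\<exists>C Y. \<forall>w. Y \<le> Im w \<longrightarrow> norm (f w) \<le> C * exp (- 2 * pi * Im w / real N)"
proof -
  have "slash 1 0 0 1 w = f w" for w by (simp add: slash_def moeb_def)
  thus ?thesis using slash_decay[of 1 1 0 0] by simp
qed

lemma vert_integrable:
  fixes q :: rat
  shows "(\<lambda>t. f (of_real (of_rat q) + \<i> * of_real t) * (of_real (of_rat q) + \<i> * of_real t) ^ s) integrable_on {0..}"
proof -
  obtain \<alpha> c where qc: "quotient_of q = (\<alpha>, c)" by (cases "quotient_of q")
  have c: "c > 0" and cop: "coprime \<alpha> c" using quotient_of_denom_pos[OF qc] quotient_of_coprime[OF qc] by auto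
  define x where "x = (of_rat q :: real)"
  have x: "x = of_int \<alpha> / of_int c" using quotient_of_div[OF qc] by (simp add: x_def of_rat_divide)
  define g where "g t = f (of_real x + \<i> * of_real t) * (of_real x + \<i> * of_real t) ^ s" for t
  obtain t0 M where t0: "t0 > 0" and M: "\<And>t. 0 < t \<Longrightarrow> t \<le> t0 \<Longrightarrow> norm (f (of_real x + \<i> * of_real t)) \<le> M"
    using near_cusp_bound[OF c cop] unfolding x by blast
  have M0: "M \<ge> 0" using M[of t0] t0 norm_ge_zero[of "f (of_real x + \<i> * of_real t0)"] by linarith
  obtain C1 Y1 where CY: "\<And>w. Y1 \<le> Im w \<Longrightarrow> norm (f w) \<le> C1 * exp (- 2 * pi * Im w / real N)"
    using inf_bound by blast
  define T where "T = max (max Y1 1) t0"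
  have T0: "T > 0" "T \<ge> t0" "T \<ge> Y1" by (auto simp: T_def)
  have inH: "of_real x + \<i> * of_real t \<in> upper_half" if "t > 0" for t using that by (simp add: upper_half_def)
  have cont: "continuous_on {0<..} g"
  proof -
    have "continuous_on upper_half f" by (rule holomorphic_on_imp_continuous_on[OF f_hol])
    moreover have "continuous_on {0<..} (\<lambda>t::real. of_real x + \<i> * of_real t)" by (intro continuous_intros)
    ultimately have "continuous_on {0<..} (\<lambda>t. f (of_real x + \<i> * of_real t))"
      by (rule continuous_on_compose2) (use inH in auto)
    thus ?thesis unfolding g_def by (intro continuous_intros)
  qed
  have nz: "norm (of_real x + \<i> * of_real t) \<le> \<bar>x\<bar> + t" if "t \<ge> 0" for t
    using norm_triangle_ineq[of "of_real x" "\<i> * of_real t"] that by (simp add: norm_mult)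
  have "compact (g ` {t0..T})"
    by (intro compact_continuous_image continuous_on_subset[OF cont]) (use t0 in auto)
  then obtain M2 where M2: "\<And>t. t \<in> {t0..T} \<Longrightarrow> norm (g t) \<le> M2"
    using compact_imp_bounded bounded_iff by (metis imageI)
  define B where "B = max (M * (\<bar>x\<bar> + T) ^ s) M2"
  have B0: "B \<ge> 0" using M0 T0 by (simp add: B_def le_max_iff_disj)
  have bB: "norm (g t) \<le> B" if "0 < t" "t \<le> T" for t
  proof (cases "t \<le> t0")
    case True
    have "norm (g t) = norm (f (of_real x + \<i> * of_real t)) * norm (of_real x + \<i> * of_real t) ^ s"
      by (simp add: g_def norm_mult norm_power)
    also have "\<dots> \<le> M * (\<bar>x\<bar> + T) ^ s"
      using M[OF that(1) True] nz[of t] that M0 by (intro mult_mono power_mono) auto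
    finally show ?thesis by (simp add: B_def)
  next
    case False thus ?thesis using M2[of t] that by (simp add: B_def)
  qed
  define K1 where "K1 = \<bar>C1\<bar> * fact s * (real N / pi) ^ s * exp (pi * \<bar>x\<bar> / real N)"
  have Npos: "real N > 0" using N1 by simp
  have bK1: "norm (g t) \<le> K1 * exp (- (pi / real N) * t)" if "T \<le> t" for t
  proof -
    have t0': "t > 0" using that T0 by simp
    have "norm (g t) = norm (f (of_real x + \<i> * of_real t)) * norm (of_real x + \<i> * of_real t) ^ s"
      by (simp add: g_def norm_mult norm_power)
    also have "\<dots> \<le> (\<bar>C1\<bar> * exp (- 2 * pi * t / real N)) * (\<bar>x\<bar> + t) ^ s"
    proof (intro mult_mono power_mono)
      have "norm (f (of_real x + \<i> * of_real t)) \<le> C1 * exp (- 2 * pi * t / real N)"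
        using CY[of "of_real x + \<i> * of_real t"] that T0 by simp
      thus "norm (f (of_real x + \<i> * of_real t)) \<le> \<bar>C1\<bar> * exp (- 2 * pi * t / real N)"
        by (smt (verit) exp_gt_zero mult_right_mono abs_ge_self)
    qed (use nz t0' in auto)
    also have "(\<bar>x\<bar> + t) ^ s \<le> fact s * (real N / pi) ^ s * exp (pi * (\<bar>x\<bar> + t) / real N)"
    proof -
      have "(pi * (\<bar>x\<bar> + t) / real N) ^ s / fact s \<le> exp (pi * (\<bar>x\<bar> + t) / real N)"
        using t0' Npos by (intro pow_le_exp) auto
      hence "(pi * (\<bar>x\<bar> + t) / real N) ^ s \<le> exp (pi * (\<bar>x\<bar> + t) / real N) * fact s"
        using pos_divide_le_eq[of "fact s :: real"] by (metis fact_gt_zero)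
      hence "(pi * (\<bar>x\<bar> + t) / real N) ^ s \<le> fact s * exp (pi * (\<bar>x\<bar> + t) / real N)"
        by (simp add: mult.commute)
      hence "(real N / pi) ^ s * (pi * (\<bar>x\<bar> + t) / real N) ^ s \<le> (real N / pi) ^ s * (fact s * exp (pi * (\<bar>x\<bar> + t) / real N))"
        using Npos by (intro mult_left_mono) auto
      moreover have "(real N / pi) ^ s * (pi * (\<bar>x\<bar> + t) / real N) ^ s = (\<bar>x\<bar> + t) ^ s"
        using Npos by (simp add: power_mult_distrib[symmetric])
      ultimately show ?thesis by (simp add: ac_simps)
    qed
    hence "(\<bar>C1\<bar> * exp (- 2 * pi * t / real N)) * (\<bar>x\<bar> + t) ^ s \<le>
        (\<bar>C1\<bar> * exp (- 2 * pi * t / real N)) * (fact s * (real N / pi) ^ s * exp (pi * (\<bar>x\<bar> + t) / real N))"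
      by (intro mult_left_mono) auto
    also have "\<dots> = K1 * exp (- (pi / real N) * t)"
    proof -
      have "exp (- 2 * pi * t / real N) * exp (pi * (\<bar>x\<bar> + t) / real N) = exp (pi * \<bar>x\<bar> / real N) * exp (- (pi / real N) * t)"
        unfolding exp_add[symmetric] by (rule arg_cong[of _ _ exp]) (simp add: field_simps add_divide_distrib)
      thus ?thesis unfolding K1_def by (simp add: ac_simps)
    qed
    finally show ?thesis .
  qed
  define K where "K = max (B * exp (pi / real N * T)) K1"
  have dom: "norm (g t) \<le> K * exp (- (pi / real N) * t)" if "t \<in> {0<..}" for t
  proof (cases "t \<le> T")
    case True
    have "norm (g t) \<le> B" using bB[of t] that True by simp
    also have "B = B * exp (pi / real N * T) * exp (- (pi / real N) * t) * exp (pi / real N * (t - T))"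
    proof -
      have "pi / real N * T + - (pi / real N) * t + pi / real N * (t - T) = 0" by (simp add: right_diff_distrib)
      hence "exp (pi / real N * T) * exp (- (pi / real N) * t) * exp (pi / real N * (t - T)) = 1"
        by (simp flip: exp_add)
      thus ?thesis by (simp add: mult.assoc)
    qed
    also have "\<dots> \<le> B * exp (pi / real N * T) * exp (- (pi / real N) * t)"
    proof -
      have "exp (pi / real N * (t - T)) \<le> 1" using True Npos by (simp add: mult_nonneg_nonpos divide_nonpos_pos)
      thus ?thesis using B0 by (simp add: mult_left_le)
    qed
    also have "\<dots> \<le> K * exp (- (pi / real N) * t)" by (intro mult_right_mono) (auto simp: K_def)
    finally show ?thesis .
  next
    case False
    hence "norm (g t) \<le> K1 * exp (- (pi / real N) * t)" using bK1 by simp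
    also have "\<dots> \<le> K * exp (- (pi / real N) * t)" by (intro mult_right_mono) (auto simp: K_def)
    finally show ?thesis .
  qed
  have negl: "negligible ({0<..} - {0..} \<union> ({0..} - ({0<..}::real set)))"
    by (rule negligible_subset[of "{0}"]) auto
  have "(\<lambda>t. K * exp (- (pi / real N) * t)) integrable_on {0..}"
    using integrable_cmul[OF integrable_on_exp_minus_to_infinity[of "pi / real N" 0], of K] Npos by simp
  hence intD: "(\<lambda>t. K * exp (- (pi / real N) * t)) integrable_on {0<..}"
    using integrable_spike_set_eq[OF negl] by blast
  have "g integrable_on {0<..}"
  proof (rule measurable_bounded_by_integrable_imp_integrable[OF _ intD])
    show "g \<in> borel_measurable (lebesgue_on {0<..})"
      by (rule continuous_imp_measurable_on_sets_lebesgue[OF cont]) simp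
    show "({0<..}::real set) \<in> sets lebesgue" by simp
  qed (use dom in auto)
  hence "g integrable_on {0..}" using integrable_spike_set_eq[OF negl] by blast
  thus ?thesis unfolding g_def[abs_def] x_def .
qed

end


lemma icusp_scale: "int_to_icusp (\<lambda>z. c * g z) r = c * int_to_icusp g r"
  by (simp add: int_to_icusp_def)

lemma icusp_poly:
  assumes cf: "cusp_form k N \<epsilon> f" and dc: "dirichlet_char N \<epsilon>" and N1: "1 \<le> N"
  shows "int_to_icusp (\<lambda>z. f z * (\<Sum>s\<le>t. c s * z ^ s)) (of_rat q)
       = (\<Sum>s\<le>t. c s * int_to_icusp (\<lambda>z. f z * z ^ s) (of_rat q))"
proof -
  define g where "g s t' = f (of_real (of_rat q) + \<i> * of_real t') * (of_real (of_rat q) + \<i> * of_real t') ^ s" for s t'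
  have int: "(\<lambda>t'. c s * g s t') integrable_on {0..}" for s
    unfolding g_def by (intro integrable_on_mult_right vert_integrable[OF cf dc N1])
  have "integral {0..} (\<lambda>t'. f (of_real (of_rat q) + \<i> * of_real t') *
          (\<Sum>s\<le>t. c s * (of_real (of_rat q) + \<i> * of_real t') ^ s))
        = integral {0..} (\<lambda>t'. \<Sum>s\<le>t. c s * g s t')"
    by (simp add: g_def sum_distrib_left algebra_simps)
  also have "\<dots> = (\<Sum>s\<le>t. integral {0..} (\<lambda>t'. c s * g s t'))"
    by (rule integral_sum) (use int in auto)
  also have "\<dots> = (\<Sum>s\<le>t. c s * integral {0..} (g s))" by simp
  finally show ?thesis
    by (simp add: int_to_icusp_def g_def[abs_def] sum_distrib_left algebra_simps)
qed

lemma theta_decomp: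
  assumes cf: "cusp_form k N \<epsilon> f" and dc: "dirichlet_char N \<epsilon>" and N1: "1 \<le> N"
    and tk: "t \<le> k - 2" and p0: "p > 0"
  shows "theta_coeff f k \<Omega> p n i t a =
    (\<Sum>s\<le>t. of_nat (t choose s) * of_nat (p ^ (n + 1)) ^ s * of_int a ^ (t - s) *
        (xi_coeff f k (even i) (of_rat (- of_int a / of_nat (p ^ (n + 1)))) s / \<Omega>)
        / of_nat ((k - 2) choose s))"
proof -
  define P where "P = p ^ (n + 1)"
  define r :: rat where "r = - of_int a / of_nat P"
  have xr: "(- of_int a / real (p ^ (n + 1))) = of_rat r" by (simp add: r_def P_def of_rat_divide of_rat_minus of_rat_mult of_rat_power)
  have xr': "(of_int a / real (p ^ (n + 1))) = of_rat (- r)" by (simp add: r_def P_def of_rat_divide of_rat_minus of_rat_mult of_rat_power)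
  have xr'': "- (of_rat r :: real) = of_rat (- r)" by (simp add: of_rat_minus)
  define c :: "nat \<Rightarrow> complex" where "c s = of_nat (t choose s) * of_nat P ^ s * of_int a ^ (t - s)" for s
  define J1 where "J1 s = int_to_icusp (\<lambda>z. f z * z ^ s) (of_rat r)" for s
  define J2 where "J2 s = int_to_icusp (\<lambda>z. f z * z ^ s) (of_rat (- r))" for s
  define I2 where "I2 s = int_to_icusp (\<lambda>z. f z * (- z) ^ s) (- of_rat r)" for s
  have I2: "I2 s = (-1) ^ s * J2 s" for s
  proof -
    have fe: "(\<lambda>z. f z * (- z) ^ s) = (\<lambda>z. (-1) ^ s * (f z * z ^ s))"
    proof
      fix z :: complex
      have "(- z) ^ s = (-1) ^ s * z ^ s" by (metis mult_minus1 power_mult_distrib)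
      thus "f z * (- z) ^ s = (-1) ^ s * (f z * z ^ s)" by (simp only: mult.left_commute)
    qed
    have "I2 s = int_to_icusp (\<lambda>z. (-1) ^ s * (f z * z ^ s)) (of_rat (- r))"
      unfolding I2_def xr'' fe ..
    thus ?thesis by (simp add: icusp_scale J2_def)
  qed
  have e1: "(of_nat P * z + of_int a) ^ t = (\<Sum>s\<le>t. c s * z ^ s)" for z :: complex
    unfolding binomial_ring by (intro sum.cong refl) (simp add: c_def power_mult_distrib algebra_simps)
  have e2: "(of_nat P * z - of_int a) ^ t = (\<Sum>s\<le>t. ((-1) ^ (t - s) * c s) * z ^ s)" for z :: complex
  proof -
    have "(of_nat P * z - of_int a) ^ t = (of_nat P * z + (- of_int a)) ^ t" by simp
    also have "\<dots> = (\<Sum>s\<le>t. ((-1) ^ (t - s) * c s) * z ^ s)"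
    proof (unfold binomial_ring, intro sum.cong refl)
      fix s
      have "(- of_int a :: complex) ^ (t - s) = (-1) ^ (t - s) * of_int a ^ (t - s)"
        by (metis mult_minus1 power_mult_distrib)
      thus "of_nat (t choose s) * (of_nat P * z) ^ s * (- of_int a) ^ (t - s) = (-1) ^ (t - s) * c s * z ^ s"
        by (simp add: c_def power_mult_distrib algebra_simps)
    qed
    finally show ?thesis .
  qed
  have T1: "int_to_icusp (\<lambda>z. f z * (of_nat P * z + of_int a) ^ t) (of_rat r) = (\<Sum>s\<le>t. c s * J1 s)"
    unfolding e1 J1_def by (rule icusp_poly[OF cf dc N1])
  have T2: "int_to_icusp (\<lambda>z. f z * (of_nat P * z - of_int a) ^ t) (of_rat (- r)) = (-1) ^ t * (\<Sum>s\<le>t. c s * I2 s)"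
  proof -
    have "int_to_icusp (\<lambda>z. f z * (of_nat P * z - of_int a) ^ t) (of_rat (- r)) = (\<Sum>s\<le>t. ((-1) ^ (t - s) * c s) * J2 s)"
      unfolding e2 J2_def by (rule icusp_poly[OF cf dc N1])
    also have "\<dots> = (\<Sum>s\<le>t. (-1) ^ t * (c s * I2 s))"
    proof (intro sum.cong refl)
      fix s assume "s \<in> {..t}"
      hence "(-1) ^ (t - s) * (-1) ^ s = ((-1) ^ t :: complex)" by (simp add: power_add[symmetric])
      moreover have "(-1) ^ s * (-1) ^ s = (1 :: complex)" by (simp add: power_add[symmetric] flip: power_mult_distrib)
      ultimately have m: "(-1) ^ t * (-1) ^ s = ((-1) ^ (t - s) :: complex)"
        by (metis mult.assoc mult_1_right)
      have "(-1) ^ t * (c s * I2 s) = ((-1) ^ t * (-1) ^ s) * c s * J2 s" by (simp add: I2 mult_ac)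
      thus "(-1) ^ (t - s) * c s * J2 s = (-1) ^ t * (c s * I2 s)" by (simp only: m)
    qed
    finally show ?thesis by (simp add: sum_distrib_left)
  qed
  have xi: "xi_coeff f k (even i) (of_rat r) s / \<Omega> / of_nat ((k - 2) choose s)
        = of_real pi * \<i> * (J1 s + (-1) ^ (i + k) * I2 s) / \<Omega>" if "s \<le> t" for s
  proof -
    have "((k - 2) choose s) \<noteq> 0" using that tk by simp
    moreover have "(if even i then 1 else -1) * (-1) ^ k = ((-1) ^ (i + k) :: complex)"
      by (simp add: power_add)
    ultimately have "xi_coeff f k (even i) (of_rat r) s =
        of_nat ((k - 2) choose s) * (of_real pi * \<i> * (J1 s + (-1) ^ (i + k) * I2 s))"
      unfolding xi_coeff_def J1_def I2_def by (simp add: algebra_simps)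
    thus ?thesis using \<open>((k - 2) choose s) \<noteq> 0\<close> by simp
  qed
  have sgn: "(-1) ^ (i + k + t) * (-1) ^ t = ((-1) ^ (i + k) :: complex)"
    by (simp add: power_add mult.assoc flip: power_mult_distrib)
  have "theta_coeff f k \<Omega> p n i t a = of_real pi * \<i> / \<Omega> *
      ((\<Sum>s\<le>t. c s * J1 s) + (-1) ^ (i + k + t) * ((-1) ^ t * (\<Sum>s\<le>t. c s * I2 s)))"
    unfolding theta_coeff_def xr xr' T1[symmetric] T2[symmetric] P_def by simp
  also have "\<dots> = (\<Sum>s\<le>t. c s * (of_real pi * \<i> * (J1 s + (-1) ^ (i + k) * I2 s) / \<Omega>))"
    unfolding mult.assoc[symmetric] sgn
    by (simp add: sum_distrib_left sum_distrib_right sum.distrib algebra_simps add_divide_distrib sum_divide_distrib)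
  also have "\<dots> = (\<Sum>s\<le>t. c s * (xi_coeff f k (even i) (of_rat r) s / \<Omega> / of_nat ((k - 2) choose s)))"
  proof (intro sum.cong refl)
    fix s assume "s \<in> {..t}"
    hence "s \<le> t" by simp
    show "c s * (of_real pi * \<i> * (J1 s + (-1) ^ (i + k) * I2 s) / \<Omega>) =
      c s * (xi_coeff f k (even i) (of_rat r) s / \<Omega> / of_nat ((k - 2) choose s))"
      by (simp only: xi[OF \<open>s \<le> t\<close>])
  qed
  also have "\<dots> = (\<Sum>s\<le>t. of_nat (t choose s) * of_nat (p ^ (n + 1)) ^ s * of_int a ^ (t - s) *
        (xi_coeff f k (even i) (of_rat (- of_int a / of_nat (p ^ (n + 1)))) s / \<Omega>)
        / of_nat ((k - 2) choose s))"
    by (simp add: c_def r_def P_def)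
  finally show ?thesis .
qed


lemma algebraic_of_nat' [simp, intro]: "algebraic (of_nat n :: complex)"
  by (rule algebraic_int_imp_algebraic) simp
lemma algebraic_of_int' [simp, intro]: "algebraic (of_int n :: complex)"
  by (rule algebraic_int_imp_algebraic) simp

lemma algebraic_sum:
  "(\<And>a. a \<in> A \<Longrightarrow> algebraic (g a :: complex)) \<Longrightarrow> algebraic (sum g A)"
  by (induction A rule: infinite_finite_induct) (auto intro: algebraic_add_mult)

lemma algebraic_power: "algebraic (x :: complex) \<Longrightarrow> algebraic (x ^ n)"
  by (induction n) (auto intro: algebraic_add_mult)

locale iota_hom =
  fixes \<iota> :: "complex \<Rightarrow> 'K::field_char_0"
  assumes i1: "\<iota> 1 = 1"
    and ihom: "\<forall>x y. algebraic x \<longrightarrow> algebraic y \<longrightarrow> \<iota> (x + y) = \<iota> x + \<iota> y \<and> \<iota> (x * y) = \<iota> x * \<iota> y"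
begin

lemma iadd: "algebraic x \<Longrightarrow> algebraic y \<Longrightarrow> \<iota> (x + y) = \<iota> x + \<iota> y" using ihom by blast
lemma imult: "algebraic x \<Longrightarrow> algebraic y \<Longrightarrow> \<iota> (x * y) = \<iota> x * \<iota> y" using ihom by blast

lemma i0: "\<iota> 0 = 0"
  using iadd[of 0 0] by simp

lemma inat: "\<iota> (of_nat n) = of_nat n"
  by (induction n) (simp_all add: i0 iadd[of 1] i1 add.commute)

lemma iminus: "algebraic x \<Longrightarrow> \<iota> (- x) = - \<iota> x"
proof -
  assume "algebraic x"
  hence "\<iota> x + \<iota> (- x) = 0" using iadd[of x "- x"] i0 by auto
  thus ?thesis by (metis neg_eq_iff_add_eq_0)
qed

lemma iint: "\<iota> (of_int z) = of_int z"
  by (cases z rule: int_cases) (simp_all add: inat iminus del: of_nat_Suc)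

lemma iinv: "algebraic x \<Longrightarrow> \<iota> (inverse x) = inverse (\<iota> x)"
proof (cases "x = 0")
  case True thus ?thesis by (simp add: i0)
next
  case False
  assume "algebraic x"
  hence "\<iota> x * \<iota> (inverse x) = 1" using imult[of x "inverse x"] False i1 by auto
  thus ?thesis by (metis inverse_unique)
qed

lemma ipow: "algebraic x \<Longrightarrow> \<iota> (x ^ n) = \<iota> x ^ n"
  by (induction n) (simp_all add: i1 imult algebraic_power)

lemma isum: "(\<And>a. a \<in> A \<Longrightarrow> algebraic (g a)) \<Longrightarrow> \<iota> (sum g A) = (\<Sum>a\<in>A. \<iota> (g a))"
proof (induction A rule: infinite_finite_induct)
  case (insert a F)
  thus ?case by (simp add: iadd algebraic_sum)
qed (simp_all add: i0)

end

lemma binom_alt: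
  fixes x :: "'a::comm_ring_1"
  assumes "s \<le> j"
  shows "(\<Sum>t\<le>j. (-1) ^ (j - t) * of_nat (j choose t) * of_nat (t choose s) * x ^ t)
       = of_nat (j choose s) * x ^ s * (x - 1) ^ (j - s)"
proof -
  define g where "g t = (-1) ^ (j - t) * of_nat (j choose t) * of_nat (t choose s) * x ^ t" for t
  have "(\<Sum>t\<le>j. g t) = (\<Sum>t\<in>{s..j}. g t)"
    by (rule sum.mono_neutral_right) (auto simp: g_def binomial_eq_0)
  also have "{s..j} = {0 + s..(j - s) + s}" using assms by simp
  also have "(\<Sum>t\<in>{0 + s..(j - s) + s}. g t) = (\<Sum>r\<in>{0..j - s}. g (r + s))"
    by (rule sum.shift_bounds_cl_nat_ivl)
  also have "\<dots> = (\<Sum>r\<le>j - s. of_nat (j choose s) * x ^ s * (of_nat ((j - s) choose r) * x ^ r * (-1) ^ (j - s - r)))"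
  proof (intro sum.cong)
    fix r assume r: "r \<in> {..j - s}"
    have "(j choose (r + s)) * ((r + s) choose s) = (j choose s) * ((j - s) choose r)"
      using choose_mult[of s "r + s" j] r assms by simp
    hence "(of_nat (j choose (r + s)) * of_nat ((r + s) choose s) :: 'a) = of_nat (j choose s) * of_nat ((j - s) choose r)"
      by (metis of_nat_mult)
    moreover have "g (r + s) = (-1) ^ (j - s - r) * (of_nat (j choose (r + s)) * of_nat ((r + s) choose s)) * (x ^ s * x ^ r)"
      unfolding g_def by (simp add: power_add mult_ac diff_diff_add add.commute)
    ultimately show "g (r + s) = of_nat (j choose s) * x ^ s * (of_nat ((j - s) choose r) * x ^ r * (-1) ^ (j - s - r))"
      by (simp add: mult_ac)
  qed (auto simp: atLeast0AtMost)
  also have "\<dots> = of_nat (j choose s) * x ^ s * (\<Sum>r\<le>j - s. of_nat ((j - s) choose r) * x ^ r * (-1) ^ (j - s - r))"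
    by (simp only: sum_distrib_left)
  also have "(\<Sum>r\<le>j - s. of_nat ((j - s) choose r) * x ^ r * (-1) ^ (j - s - r)) = (x + (-1)) ^ (j - s)"
    by (rule binomial_ring[symmetric])
  finally show ?thesis by (simp add: g_def)
qed

lemma coeff_11_pow_int: "coeff ([:1, 1:] ^ m) l \<in> \<int>"
proof (induction m arbitrary: l)
  case 0 thus ?case by (cases l) auto
next
  case (Suc m)
  have "[:1, 1:] ^ Suc m = [:1, 1:] ^ m + pCons 0 ([:1, 1:] ^ m)"
    by (simp add: algebra_simps pCons_one[symmetric] mult_pCons_left)
  thus ?case using Suc by (cases l) (auto simp: coeff_pCons)
qed

lemma pcompose_power: "pcompose (q ^ m) r = (pcompose q r) ^ m"
  by (induction m) (simp_all add: pcompose_1 pcompose_mult)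

lemma pcompose_11:
  fixes c :: "'a::comm_ring_1"
  shows "pcompose ([:1, 1:] ^ m) [:c - 1, c:] = smult (c ^ m) ([:1, 1:] ^ m)"
proof -
  have h: "pcompose [:1, 1:] [:c - 1, c:] = smult c [:1, 1:]"
    by (simp add: pcompose_pCons)
  have "pcompose ([:1, 1:] ^ m) [:c - 1, c:] = (pcompose [:1, 1:] [:c - 1, c:]) ^ m" by (rule pcompose_power)
  also have "\<dots> = (smult c [:1, 1:]) ^ m" by (simp only: h)
  also have "\<dots> = smult (c ^ m) ([:1, 1:] ^ m)" by (rule smult_power)
  finally show ?thesis .
qed

lemma smult_sum_right: "smult c (sum f A) = (\<Sum>a\<in>A. smult c (f a))"
  by (induction A rule: infinite_finite_induct) (auto simp: smult_add_right)


context padic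
begin

lemma c_bound:
  fixes A z U :: 'K and lam :: "nat \<Rightarrow> 'K" and e :: "nat \<Rightarrow> nat" and j i n :: nat
  assumes aA: "absv A = 1" and aZ: "absv z = 1" and aU: "absv U = 1"
    and close: "absv (A * inverse z - U) \<le> 1 / real p ^ Suc n"
    and lam: "\<And>s. s \<le> j \<Longrightarrow> absv (lam s) \<le> 1"
    and ze: "\<And>t. t \<le> j \<Longrightarrow> z ^ e t = z ^ i * inverse z ^ t"
  shows "absv (\<Sum>t\<le>j. (-1) ^ (j - t) * of_nat (j choose t) *
            ((\<Sum>s\<le>t. of_nat (t choose s) * of_nat (p ^ (n + 1)) ^ s * A ^ (t - s) * lam s) * z ^ e t) *
            inverse U ^ t) \<le> 1 / real p ^ ((n + 1) * j)"
proof -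
  define P' where "P' = (of_nat (p ^ (n + 1)) :: 'K)"
  define eta where "eta = A * inverse z * inverse U"
  have A0: "A \<noteq> 0" and z0: "z \<noteq> 0" and U0: "U \<noteq> 0" using aA aZ aU by auto
  define X where "X t s = (-1) ^ (j - t) * of_nat (j choose t) *
      (of_nat (t choose s) * P' ^ s * A ^ (t - s) * lam s) * z ^ e t * inverse U ^ t" for t s
  have Xeq: "X t s = z ^ i * (P' * inverse A) ^ s * lam s *
      ((-1) ^ (j - t) * of_nat (j choose t) * of_nat (t choose s) * eta ^ t)" if "t \<le> j" for t s
  proof (cases "s \<le> t")
    case True
    have "A ^ (t - s) = A ^ t * inverse A ^ s" using A0 True by (simp add: power_diff field_simps)
    thus ?thesis using ze[OF that] unfolding X_def eta_def
      by (simp add: power_mult_distrib mult_ac)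
  next
    case False thus ?thesis by (simp add: X_def binomial_eq_0)
  qed
  have "(\<Sum>t\<le>j. (-1) ^ (j - t) * of_nat (j choose t) *
            ((\<Sum>s\<le>t. of_nat (t choose s) * P' ^ s * A ^ (t - s) * lam s) * z ^ e t) * inverse U ^ t)
      = (\<Sum>t\<le>j. \<Sum>s\<le>t. X t s)"
    by (simp add: X_def sum_distrib_left sum_distrib_right mult_ac)
  also have "\<dots> = (\<Sum>t\<le>j. \<Sum>s\<le>j. X t s)"
  proof (rule sum.cong[OF refl])
    fix t assume t: "t \<in> {..j}"
    show "(\<Sum>s\<le>t. X t s) = (\<Sum>s\<le>j. X t s)"
      using t by (intro sum.mono_neutral_left) (auto simp: X_def binomial_eq_0)
  qed
  also have "\<dots> = (\<Sum>t\<le>j. \<Sum>s\<le>j. z ^ i * (P' * inverse A) ^ s * lam s *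
      ((-1) ^ (j - t) * of_nat (j choose t) * of_nat (t choose s) * eta ^ t))"
    by (rule sum.cong[OF refl], rule sum.cong[OF refl]) (simp add: Xeq)
  also have "\<dots> = (\<Sum>s\<le>j. z ^ i * (P' * inverse A) ^ s * lam s *
      (\<Sum>t\<le>j. (-1) ^ (j - t) * of_nat (j choose t) * of_nat (t choose s) * eta ^ t))"
    by (subst sum.swap) (simp add: sum_distrib_left)
  also have "\<dots> = (\<Sum>s\<le>j. z ^ i * (P' * inverse A) ^ s * lam s *
      (of_nat (j choose s) * eta ^ s * (eta - 1) ^ (j - s)))"
    by (rule sum.cong[OF refl]) (simp add: binom_alt)
  finally have eq: "(\<Sum>t\<le>j. (-1) ^ (j - t) * of_nat (j choose t) *
            ((\<Sum>s\<le>t. of_nat (t choose s) * P' ^ s * A ^ (t - s) * lam s) * z ^ e t) * inverse U ^ t)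
      = (\<Sum>s\<le>j. z ^ i * (P' * inverse A) ^ s * lam s *
      (of_nat (j choose s) * eta ^ s * (eta - 1) ^ (j - s)))" .
  have aeta: "absv eta = 1" by (simp add: eta_def abs_mult abs_inverse aA aZ aU)
  have aeta1: "absv (eta - 1) \<le> 1 / real p ^ Suc n"
  proof -
    have "eta - 1 = (A * inverse z - U) * inverse U" using U0 by (simp add: eta_def field_simps)
    thus ?thesis using close by (simp add: abs_mult abs_inverse aU)
  qed
  have aP: "absv P' = 1 / real p ^ Suc n" unfolding P'_def using abs_p_pow[of "n + 1"] by simp
  define r where "r = 1 / real p ^ Suc n"
  have r0: "0 \<le> r" "r \<le> 1" using rp_pow_mono[of 0 "Suc n"] by (auto simp: r_def)
  have rj: "r ^ j = 1 / real p ^ ((n + 1) * j)" unfolding r_def power_one_over power_mult[symmetric] by (simp add: mult.commute)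
  have "absv (\<Sum>s\<le>j. z ^ i * (P' * inverse A) ^ s * lam s *
      (of_nat (j choose s) * eta ^ s * (eta - 1) ^ (j - s))) \<le> r ^ j"
  proof (intro abs_sum_le)
    fix s assume "s \<in> {..j}"
    hence sj: "s \<le> j" by simp
    have "absv (z ^ i * (P' * inverse A) ^ s * lam s * (of_nat (j choose s) * eta ^ s * (eta - 1) ^ (j - s)))
        = r ^ s * absv (lam s) * absv (of_nat (j choose s) :: 'K) * absv (eta - 1) ^ (j - s)"
      by (simp add: abs_mult abs_power abs_inverse aZ aA aP aeta r_def)
    also have "\<dots> \<le> r ^ s * 1 * 1 * r ^ (j - s)"
      using lam[OF sj] abs_of_nat_le1[of "j choose s"] aeta1 r0
      by (intro mult_mono power_mono) (auto simp: r_def)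
    also have "\<dots> = r ^ j" using sj by (simp add: power_add[symmetric])
    finally show "absv (z ^ i * (P' * inverse A) ^ s * lam s * (of_nat (j choose s) * eta ^ s * (eta - 1) ^ (j - s))) \<le> r ^ j" .
  qed (use r0 in simp)
  thus ?thesis using eq rj by (simp add: P'_def)
qed

end


theorem lemma3p4:
  fixes absv :: "'K::field_char_0 \<Rightarrow> real"
    and \<iota> :: "complex \<Rightarrow> 'K"
    and E :: "'K set"
    and p k N n i j :: nat
    and \<epsilon> :: "int \<Rightarrow> complex"
    and f :: "complex \<Rightarrow> complex"
    and an :: "nat \<Rightarrow> complex"
    and Omp Omm :: complex
    and u :: 'K
  assumes "prime p" and "odd p"
    and "Cp_setup absv p \<iota>"
    and "2 \<le> k" and "1 \<le> N" and "\<not> p dvd N"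
    and "dirichlet_char N \<epsilon>"
    and "normalized_eigenform k N \<epsilon> f an"
    and "absv (\<iota> (an p)) < 1"
    and "finite_ext_Qp absv E"
    and "\<forall>m. algebraic (an m) \<and> \<iota> (an m) \<in> E"
    and "\<forall>m. algebraic (\<epsilon> m) \<and> \<iota> (\<epsilon> m) \<in> E"
    and "cohom_period absv \<iota> E f k True Omp"
    and "cohom_period absv \<iota> E f k False Omm"
    and "in_Zp absv u" and "absv (u - 1) = 1 / real p"
    and "p > k - 1"
    and "i \<le> p - 2" and "j \<le> k - 2"
  shows "pnorm absv
           (\<Sum>t\<le>j. smult ((-1) ^ (j - t) * of_nat (j choose t))
              (pcompose (Qpoly absv \<iota> f k Omp Omm p u n i t) [:inverse (u ^ t) - 1, inverse (u ^ t):]))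
         \<le> 1 / real p ^ ((n + 1) * j)"
proof -
  note cp = assms(3)
  have na: "nonarch_abs absv" and pabs: "absv (of_nat p) = 1 / real p"
    and compl: "\<forall>X::nat \<Rightarrow> 'K. (\<forall>e>0. \<exists>M. \<forall>m\<ge>M. \<forall>n\<ge>M. absv (X m - X n) < e) \<longrightarrow>
        (\<exists>L. \<forall>e>0. \<exists>M. \<forall>n\<ge>M. absv (X n - L) < e)"
    and i1: "\<iota> 1 = 1"
    and ihom: "\<forall>x y. algebraic x \<longrightarrow> algebraic y \<longrightarrow> \<iota> (x + y) = \<iota> x + \<iota> y \<and> \<iota> (x * y) = \<iota> x * \<iota> y"
    using cp unfolding Cp_setup_def by blast+
  interpret padic absv p by unfold_locales (use na pabs assms(1,2) compl in auto)
  interpret iota_hom \<iota> by unfold_locales (use i1 ihom in auto)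
  have cf: "cusp_form k N \<epsilon> f" using assms(8) by (simp add: normalized_eigenform_def)
  have dc: "dirichlet_char N \<epsilon>" and N1: "1 \<le> N" using assms by auto
  define \<Omega> where "\<Omega> = (if even i then Omp else Omm)"
  have cohom: "cohom_period absv \<iota> E f k (even i) \<Omega>"
    using assms(13,14) by (simp add: \<Omega>_def)
  have jk: "j \<le> k - 2" using assms by simp
  have pk: "k - 2 < p" using assms by simp
  define U where "U = units_mod p n"
  have finU: "finite U" unfolding U_def units_mod_def
    by (rule finite_subset[of _ "{1..int (p ^ (n + 1))}"]) auto
  have Ua: "coprime a (int p)" "0 \<le> a" if "a \<in> U" for a using that by (auto simp: U_def units_mod_def)
  define P where "P = p ^ (n + 1)"
  define mu where "mu a s = xi_coeff f k (even i) (of_rat (- of_int a / of_nat P)) s / \<Omega>" for a :: int and s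
  define lam where "lam a s = \<iota> (mu a s) * inverse (of_nat ((k - 2) choose s))" for a s
  have mu_alg: "algebraic (mu a s)" and mu_abs: "absv (\<iota> (mu a s)) \<le> 1" if "s \<le> k - 2" for a s
    using cohom that unfolding cohom_period_def mu_def by blast+
  have binom_unit: "absv (of_nat ((k - 2) choose s) :: 'K) = 1" if "s \<le> k - 2" for s
  proof -
    have "\<not> p dvd fact (k - 2)" using prime_dvd_fact_iff[OF assms(1)] pk by simp
    moreover have "((k - 2) choose s) dvd fact (k - 2)"
      using binomial_fact_lemma[OF that] by (metis dvd_triv_right)
    ultimately have "\<not> p dvd ((k - 2) choose s)" by (meson dvd_trans)
    hence "coprime (int ((k - 2) choose s)) (int p)" using assms(1)
      by (metis coprime_commute coprime_int_iff prime_imp_coprime)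
    thus ?thesis using abs_coprime[of "int ((k - 2) choose s)"] by simp
  qed
  have lam_abs: "absv (lam a s) \<le> 1" if "s \<le> j" for a s
    using mu_abs[of s a] binom_unit[of s] that jk by (simp add: lam_def abs_mult abs_inverse)
  have itheta: "\<iota> (theta_coeff f k \<Omega> p n i t a) =
      (\<Sum>s\<le>t. of_nat (t choose s) * of_nat P ^ s * of_int a ^ (t - s) * lam a s)" if "t \<le> j" for t a
  proof -
    have tk: "t \<le> k - 2" using that jk by simp
    have p0: "p > 0" using assms(1) prime_gt_0_nat by blast
    have "theta_coeff f k \<Omega> p n i t a = (\<Sum>s\<le>t. (of_int (int (t choose s) * int P ^ s * a ^ (t - s)) *
        inverse (of_nat ((k - 2) choose s))) * mu a s)"
      unfolding theta_decomp[OF cf dc N1 tk p0] mu_def P_def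
      by (intro sum.cong refl) (simp add: divide_inverse mult_ac)
    also have "\<iota> \<dots> = (\<Sum>s\<le>t. \<iota> ((of_int (int (t choose s) * int P ^ s * a ^ (t - s)) *
        inverse (of_nat ((k - 2) choose s))) * mu a s))"
      using tk by (intro isum) (auto intro!: algebraic_add_mult(2) mu_alg algebraic_inverse algebraic_power)
    also have "\<dots> = (\<Sum>s\<le>t. of_nat (t choose s) * of_nat P ^ s * of_int a ^ (t - s) * lam a s)"
    proof (intro sum.cong refl)
      fix s assume "s \<in> {..t}"
      hence sk: "s \<le> k - 2" using tk by simp
      show "\<iota> ((of_int (int (t choose s) * int P ^ s * a ^ (t - s)) * inverse (of_nat ((k - 2) choose s))) * mu a s)
          = of_nat (t choose s) * of_nat P ^ s * of_int a ^ (t - s) * lam a s"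
      proof -
        define Z where "Z = int (t choose s) * int P ^ s * a ^ (t - s)"
        have k1: "algebraic (of_int Z * inverse (of_nat ((k - 2) choose s)) :: complex)"
          by (intro algebraic_add_mult(2) algebraic_inverse) auto
        have "\<iota> ((of_int Z * inverse (of_nat ((k - 2) choose s))) * mu a s)
            = \<iota> (of_int Z * inverse (of_nat ((k - 2) choose s))) * \<iota> (mu a s)"
          by (rule imult[OF k1 mu_alg[OF sk]])
        also have "\<iota> (of_int Z * inverse (of_nat ((k - 2) choose s))) = of_int Z * inverse (of_nat ((k - 2) choose s))"
          by (subst imult) (auto intro: algebraic_inverse simp: iint iinv inat)
        finally show ?thesis by (simp add: Z_def lam_def mult_ac)
      qed
    qed
    finally show ?thesis .
  qed
  define z where "z a = teich absv p a" for a
  define m where "m a = mexp absv p u n a" for a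
  define e where "e t = nat ((int i - int t) mod (int p - 1))" for t
  have p1: "p > 1" using p_gt1 .
  have zp: "z a ^ (p - 1) = 1" and za: "absv (z a) = 1" if "a \<in> U" for a
    using teich_props[OF Ua[OF that]] by (auto simp: z_def)
  have pow_mod: "w ^ x = w ^ (x mod (p - 1))" if "w ^ (p - 1) = (1 :: 'K)" for w x
  proof -
    have "w ^ x = w ^ ((p - 1) * (x div (p - 1)) + x mod (p - 1))" by (simp only: mult_div_mod_eq)
    also have "\<dots> = w ^ (x mod (p - 1))" by (simp only: power_add power_mult that power_one mult_1_left)
    finally show ?thesis .
  qed
  have ze: "z a ^ e t = z a ^ i * inverse (z a) ^ t" if a: "a \<in> U" for a t
  proof -
    have pm: "int p - 1 > 0" using p1 by simp
    have ie: "int (e t) = (int i - int t) mod (int p - 1)" using pm by (simp add: e_def)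
    have "int ((e t + t) mod (p - 1)) = int ((i) mod (p - 1))"
    proof -
      have "int ((e t + t) mod (p - 1)) = (int (e t) + int t) mod (int p - 1)"
        using p1 by (simp add: zmod_int of_nat_diff)
      also have "\<dots> = ((int i - int t) + int t) mod (int p - 1)" unfolding ie by (simp add: mod_add_left_eq)
      also have "\<dots> = int (i mod (p - 1))" using p1 by (simp add: zmod_int of_nat_diff)
      finally show ?thesis .
    qed
    hence md: "(e t + t) mod (p - 1) = i mod (p - 1)" by simp
    have "z a ^ e t * z a ^ t = z a ^ i"
      using pow_mod[OF zp[OF a], of "e t + t"] pow_mod[OF zp[OF a], of i] md by (simp add: power_add)
    moreover have "z a \<noteq> 0" using za[OF a] by auto
    ultimately show ?thesis by (simp add: field_simps power_inverse)
  qed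
  have mlt: "absv (u ^ m a - of_int a * inverse (z a)) \<le> 1 / real p ^ Suc n" if "a \<in> U" for a
    using mexp_props(2)[OF assms(16) assms(15) Ua[OF that]] by (simp add: m_def z_def)
  define c where "c a = (\<Sum>t\<le>j. (-1) ^ (j - t) * of_nat (j choose t) *
      (\<iota> (theta_coeff f k \<Omega> p n i t a) * z a ^ e t) * inverse (u ^ m a) ^ t)" for a
  have cb: "absv (c a) \<le> 1 / real p ^ ((n + 1) * j)" if a: "a \<in> U" for a
  proof -
    have "c a = (\<Sum>t\<le>j. (-1) ^ (j - t) * of_nat (j choose t) *
        ((\<Sum>s\<le>t. of_nat (t choose s) * of_nat (p ^ (n + 1)) ^ s * of_int a ^ (t - s) * lam a s) * z a ^ e t) *
        inverse (u ^ m a) ^ t)"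
      unfolding c_def by (intro sum.cong refl) (simp add: itheta P_def)
    also have "absv \<dots> \<le> 1 / real p ^ ((n + 1) * j)"
    proof (rule c_bound)
      show "absv (of_int a :: 'K) = 1" using abs_coprime[OF Ua(1)[OF a]] .
      show "absv (z a) = 1" by (rule za[OF a])
      show "absv (u ^ m a) = 1" using abs_u[OF assms(16)] by (simp add: abs_power)
      show "absv (of_int a * inverse (z a) - u ^ m a) \<le> 1 / real p ^ Suc n"
        using mlt[OF a] abs_diff_sym by metis
      show "\<And>s. s \<le> j \<Longrightarrow> absv (lam a s) \<le> 1" by (rule lam_abs)
      show "\<And>t. t \<le> j \<Longrightarrow> z a ^ e t = z a ^ i * inverse (z a) ^ t" using ze[OF a] by blast
    qed
    finally show ?thesis .
  qed
  define X where "X a = ([:1, 1:] :: 'K poly) ^ m a" for a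
  have invp: "inverse (u ^ t) ^ x = inverse (u ^ x) ^ t" for t x
    by (simp add: power_inverse[symmetric] power_mult[symmetric] mult.commute)
  have Q: "pcompose (Qpoly absv \<iota> f k Omp Omm p u n i t) [:inverse (u ^ t) - 1, inverse (u ^ t):]
      = (\<Sum>a\<in>U. smult (\<iota> (theta_coeff f k \<Omega> p n i t a) * z a ^ e t * inverse (u ^ m a) ^ t) (X a))" for t
    unfolding Qpoly_def pcompose_sum pcompose_smult pcompose_11
    by (simp add: smult_smult invp U_def \<Omega>_def z_def e_def m_def X_def mult_ac)
  have Seq: "(\<Sum>t\<le>j. smult ((-1) ^ (j - t) * of_nat (j choose t))
              (pcompose (Qpoly absv \<iota> f k Omp Omm p u n i t) [:inverse (u ^ t) - 1, inverse (u ^ t):]))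
      = (\<Sum>a\<in>U. smult (c a) (X a))"
  proof -
    have "(\<Sum>t\<le>j. smult ((-1) ^ (j - t) * of_nat (j choose t))
              (pcompose (Qpoly absv \<iota> f k Omp Omm p u n i t) [:inverse (u ^ t) - 1, inverse (u ^ t):]))
        = (\<Sum>t\<le>j. \<Sum>a\<in>U. smult ((-1) ^ (j - t) * of_nat (j choose t) *
              (\<iota> (theta_coeff f k \<Omega> p n i t a) * z a ^ e t) * inverse (u ^ m a) ^ t) (X a))"
      unfolding Q by (simp add: smult_sum_right smult_smult mult_ac)
    also have "\<dots> = (\<Sum>a\<in>U. \<Sum>t\<le>j. smult ((-1) ^ (j - t) * of_nat (j choose t) *
              (\<iota> (theta_coeff f k \<Omega> p n i t a) * z a ^ e t) * inverse (u ^ m a) ^ t) (X a))"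
      by (rule sum.swap)
    also have "\<dots> = (\<Sum>a\<in>U. smult (c a) (X a))"
      unfolding c_def by (simp add: smult_sum)
    finally show ?thesis .
  qed
  have Xc: "absv (coeff (X a) l) \<le> 1" for a l
  proof -
    have "coeff (X a) l \<in> \<int>" unfolding X_def by (rule coeff_11_pow_int)
    then obtain zz where "coeff (X a) l = of_int zz" by (elim Ints_cases)
    thus ?thesis using abs_of_int_le1 by simp
  qed
  have bnd0: "0 \<le> 1 / real p ^ ((n + 1) * j)" by simp
  have coeffb: "absv (coeff (\<Sum>a\<in>U. smult (c a) (X a)) l) \<le> 1 / real p ^ ((n + 1) * j)" for l
  proof -
    have "coeff (\<Sum>a\<in>U. smult (c a) (X a)) l = (\<Sum>a\<in>U. c a * coeff (X a) l)" by (simp add: coeff_sum)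
    also have "absv \<dots> \<le> 1 / real p ^ ((n + 1) * j)"
    proof (rule abs_sum_le[OF _ bnd0])
      fix a assume a: "a \<in> U"
      have "absv (c a * coeff (X a) l) = absv (c a) * absv (coeff (X a) l)" by (rule abs_mult)
      also have "\<dots> \<le> 1 / real p ^ ((n + 1) * j) * 1"
        using cb[OF a] Xc[of a l] by (intro mult_mono) auto
      finally show "absv (c a * coeff (X a) l) \<le> 1 / real p ^ ((n + 1) * j)" by simp
    qed
    finally show ?thesis .
  qed
  show ?thesis unfolding Seq pnorm_def
    by (rule Max.boundedI) (use coeffb in auto)
qed


end
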